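(* Let $g\ge1$ and $n\ge3$. Let $H$ be a group and $\lambda:B_n(\Sigma_g)\to H$ a surjective homomorphism such that $\lambda(\iota_n(B_n))$ is isomorphic to $\mathbb{Z}$. Then there is an isomorphism $\iota:H\to B_n(\Sigma_g)/\Gamma_3(B_n(\Sigma_g))$ such that $\iota\circ\lambda$ sends each generator $\sigma_1,\dots,\sigma_{n-1},a_1,b_1,\dots,a_g,b_g$ of $B_n(\Sigma_g)$ to its class in $B_n(\Sigma_g)/\Gamma_3(B_n(\Sigma_g))$.
   Context: $\Sigma_g$: compact connected orientable surface of genus $g\ge1$ with one boundary component; $B_n(\Sigma_g)=\pi_1(F_n(\Sigma_g)/S_n)$; $\Gamma_1(G)=G$, $\Gamma_i(G)=[G,\Gamma_{i-1}(G)]$. $\iota_n:B_n\to B_n(\Sigma_g)$ is the (injective) homomorphism induced by an embedding of a disc in $\Sigma_g$; its image is the subgroup generated by $\sigma_1,\dots,\sigma_{n-1}$. $B_n(\Sigma_g)$ has the presentation with generators $\sigma_1,\dots,\sigma_{n-1},a_1,b_1,\dots,a_g,b_g$ and relations: $\sigma_i\sigma_j=\sigma_j\sigma_i$ for $|i-j|\ge2$; $\sigma_i\sigma_{i+1}\sigma_i=\sigma_{i+1}\sigma_i\sigma_{i+1}$ for $1\le i\le n-2$; $c\sigma_j=\sigma_jc$ for $c\in\{a_i,b_i\}$, $j\ge2$; $c\sigma_1c\sigma_1=\sigma_1c\sigma_1c$ for $c\in\{a_i,b_i\}$; $a_i\sigma_1b_i=\sigma_1b_i\sigma_1a_i\sigma_1$;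 $c_i(\sigma_1^{-1}c_j\sigma_1)=(\sigma_1^{-1}c_j\sigma_1)c_i$ for $c_i\in\{a_i,b_i\}$, $c_j\in\{a_j,b_j\}$, $1\le j<i\le g$. *)

theory Defs
  imports "HOL-Algebra.Algebra"
begin

text \<open>A letter is a generator together with a flag; (x, False) stands for x, (x, True) for x^-1.
  Words are lists of letters.\<close>

type_synonym 'a word = "('a \<times> bool) list"

definition inv_letter :: "'a \<times> bool \<Rightarrow> 'a \<times> bool" where
  "inv_letter l = (fst l, \<not> snd l)"

definition word_inv :: "'a word \<Rightarrow> 'a word" where
  "word_inv w = rev (map inv_letter w)"

definition gen_word :: "'a \<Rightarrow> 'a word" where
  "gen_word x = [(x, False)]"

inductive_set pres_rel :: "'a set \<Rightarrow> 'a word set \<Rightarrow> ('a word \<times> 'a word) set"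
  for S :: "'a set" and R :: "'a word set" where
  refl: "set w \<subseteq> S \<times> UNIV \<Longrightarrow> (w, w) \<in> pres_rel S R"
| sym: "(u, v) \<in> pres_rel S R \<Longrightarrow> (v, u) \<in> pres_rel S R"
| trans: "(u, v) \<in> pres_rel S R \<Longrightarrow> (v, w) \<in> pres_rel S R \<Longrightarrow> (u, w) \<in> pres_rel S R"
| relator: "set u \<subseteq> S \<times> UNIV \<Longrightarrow> set v \<subseteq> S \<times> UNIV \<Longrightarrow> r \<in> R \<Longrightarrow> set r \<subseteq> S \<times> UNIV
     \<Longrightarrow> (u @ v, u @ r @ v) \<in> pres_rel S R"
| cancel: "set u \<subseteq> S \<times> UNIV \<Longrightarrow> set v \<subseteq> S \<times> UNIV \<Longrightarrow> fst l \<in> S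
     \<Longrightarrow> (u @ v, u @ [l, inv_letter l] @ v) \<in> pres_rel S R"

definition presented_group :: "'a set \<Rightarrow> 'a word set \<Rightarrow> ('a word set) monoid" where
  "presented_group S R =
     \<lparr>carrier = {pres_rel S R `` {w} | w. set w \<subseteq> S \<times> UNIV},
      monoid.mult = (\<lambda>U V. {z. \<exists>x\<in>U. \<exists>y\<in>V. (x @ y, z) \<in> pres_rel S R}),
      one = pres_rel S R `` {[]}\<rparr>"

definition word_class :: "'a set \<Rightarrow> 'a word set \<Rightarrow> 'a word \<Rightarrow> 'a word set" where
  "word_class S R w = pres_rel S R `` {w}"

datatype bgen = Sig nat | Ag nat | Bg nat

definition braid_gens :: "nat \<Rightarrow> nat \<Rightarrow> bgen set" where
  "braid_gens n g = {Sig i | i. 1 \<le> i \<and> i \<le> n - 1} \<union> {Ag i | i. 1 \<le> i \<and> i \<le> g}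
                    \<union> {Bg i | i. 1 \<le> i \<and> i \<le> g}"

text \<open>A relation u = v is encoded as the relator u v^-1.\<close>

definition rel_word :: "bgen word \<Rightarrow> bgen word \<Rightarrow> bgen word" where
  "rel_word u v = u @ word_inv v"

definition braid_relators :: "nat \<Rightarrow> nat \<Rightarrow> bgen word set" where
  "braid_relators n g =
     {rel_word (gen_word (Sig i) @ gen_word (Sig j)) (gen_word (Sig j) @ gen_word (Sig i)) | i j.
        1 \<le> i \<and> i \<le> n - 1 \<and> 1 \<le> j \<and> j \<le> n - 1 \<and> (i + 2 \<le> j \<or> j + 2 \<le> i)}
   \<union> {rel_word (gen_word (Sig i) @ gen_word (Sig (i+1)) @ gen_word (Sig i))
               (gen_word (Sig (i+1)) @ gen_word (Sig i) @ gen_word (Sig (i+1))) | i.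
        1 \<le> i \<and> i \<le> n - 2}
   \<union> {rel_word (gen_word c @ gen_word (Sig j)) (gen_word (Sig j) @ gen_word c) | c j.
        c \<in> {Ag i | i. 1 \<le> i \<and> i \<le> g} \<union> {Bg i | i. 1 \<le> i \<and> i \<le> g} \<and> 2 \<le> j \<and> j \<le> n - 1}
   \<union> {rel_word (gen_word c @ gen_word (Sig 1) @ gen_word c @ gen_word (Sig 1))
               (gen_word (Sig 1) @ gen_word c @ gen_word (Sig 1) @ gen_word c) | c.
        c \<in> {Ag i | i. 1 \<le> i \<and> i \<le> g} \<union> {Bg i | i. 1 \<le> i \<and> i \<le> g}}
   \<union> {rel_word (gen_word (Ag i) @ gen_word (Sig 1) @ gen_word (Bg i))
               (gen_word (Sig 1) @ gen_word (Bg i) @ gen_word (Sig 1) @ gen_word (Ag i) @ gen_word (Sig 1)) | i.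
        1 \<le> i \<and> i \<le> g}
   \<union> {rel_word (gen_word ci @ word_inv (gen_word (Sig 1)) @ gen_word cj @ gen_word (Sig 1))
               (word_inv (gen_word (Sig 1)) @ gen_word cj @ gen_word (Sig 1) @ gen_word ci) | ci cj i j.
        1 \<le> j \<and> j < i \<and> i \<le> g \<and> ci \<in> {Ag i, Bg i} \<and> cj \<in> {Ag j, Bg j}}"

definition braid_group :: "nat \<Rightarrow> nat \<Rightarrow> (bgen word set) monoid" where
  "braid_group n g = presented_group (braid_gens n g) (braid_relators n g)"

definition bgen_elem :: "nat \<Rightarrow> nat \<Rightarrow> bgen \<Rightarrow> bgen word set" where
  "bgen_elem n g x = word_class (braid_gens n g) (braid_relators n g) (gen_word x)"

text \<open>The image of iota_n : B_n \<rightarrow> B_n(Sigma_g): the subgroup generated by sigma_1, ..., sigma_{n-1}.\<close>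

definition iota_image :: "nat \<Rightarrow> nat \<Rightarrow> bgen word set set" where
  "iota_image n g = generate (braid_group n g) {bgen_elem n g (Sig i) | i. 1 \<le> i \<and> i \<le> n - 1}"

definition comm_subgroup :: "('a, 'b) monoid_scheme \<Rightarrow> 'a set \<Rightarrow> 'a set \<Rightarrow> 'a set" where
  "comm_subgroup G A B = generate G
     {x \<otimes>\<^bsub>G\<^esub> y \<otimes>\<^bsub>G\<^esub> inv\<^bsub>G\<^esub> x \<otimes>\<^bsub>G\<^esub> inv\<^bsub>G\<^esub> y | x y. x \<in> A \<and> y \<in> B}"

text \<open>Gamma_1(G) = G, Gamma_i(G) = [G, Gamma_{i-1}(G)]; Gamma 0 is set to G by convention.\<close>

fun lower_central :: "('a, 'b) monoid_scheme \<Rightarrow> nat \<Rightarrow> 'a set" where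
  "lower_central G 0 = carrier G"
| "lower_central G (Suc 0) = carrier G"
| "lower_central G (Suc (Suc k)) = comm_subgroup G (carrier G) (lower_central G (Suc k))"

end

theory Submission
  imports Defs
begin


lemma pres_rel_words:
  "(u,v) \<in> pres_rel S R \<Longrightarrow> set u \<subseteq> S \<times> UNIV \<and> set v \<subseteq> S \<times> UNIV"
  by (induction rule: pres_rel.induct) (auto simp: inv_letter_def mem_Times_iff)

lemma pres_rel_cong:
  assumes "(u,v) \<in> pres_rel S R" "set x \<subseteq> S \<times> UNIV" "set y \<subseteq> S \<times> UNIV"
  shows "(x@u@y, x@v@y) \<in> pres_rel S R"
  using assms
proof (induction rule: pres_rel.induct)
  case (refl w)
  then show ?case by (intro pres_rel.refl) auto
next
  case (sym u v)
  then show ?case by (blast intro: pres_rel.sym)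
next
  case (trans u v w)
  then show ?case by (blast intro: pres_rel.trans)
next
  case (relator u v r)
  have "((x@u)@(v@y), (x@u)@r@(v@y)) \<in> pres_rel S R"
    using relator by (intro pres_rel.relator) auto
  then show ?case by simp
next
  case (cancel u v l)
  have "((x@u)@(v@y), (x@u)@[l, inv_letter l]@(v@y)) \<in> pres_rel S R"
    using cancel by (intro pres_rel.cancel) auto
  then show ?case by simp
qed

lemma pres_rel_cong_l:
  "(u,v) \<in> pres_rel S R \<Longrightarrow> set y \<subseteq> S \<times> UNIV \<Longrightarrow> (u@y, v@y) \<in> pres_rel S R"
  using pres_rel_cong[of u v S R "[]" y] by simp

lemma pres_rel_cong_r:
  "(u,v) \<in> pres_rel S R \<Longrightarrow> set x \<subseteq> S \<times> UNIV \<Longrightarrow> (x@u, x@v) \<in> pres_rel S R"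
  using pres_rel_cong[of u v S R x "[]"] by simp

lemma word_class_eq_iff:
  assumes "set u \<subseteq> S \<times> UNIV"
  shows "word_class S R u = word_class S R v \<longleftrightarrow> (u,v) \<in> pres_rel S R"
proof
  assume "word_class S R u = word_class S R v"
  moreover have "u \<in> word_class S R u" using assms by (simp add: word_class_def pres_rel.refl)
  ultimately have "(v,u) \<in> pres_rel S R" by (simp add: word_class_def)
  then show "(u,v) \<in> pres_rel S R" by (rule pres_rel.sym)
next
  assume "(u,v) \<in> pres_rel S R"
  then show "word_class S R u = word_class S R v"
    unfolding word_class_def by (auto intro: pres_rel.trans pres_rel.sym)
qed

lemma word_class_mult:
  assumes "set u \<subseteq> S \<times> UNIV" "set v \<subseteq> S \<times> UNIV"
  shows "monoid.mult (presented_group S R) (word_class S R u) (word_class S R v) = word_class S R (u@v)"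
proof -
  have "(\<exists>x. (u,x) \<in> pres_rel S R \<and> (\<exists>y. (v,y) \<in> pres_rel S R \<and> (x@y,z) \<in> pres_rel S R))
        \<longleftrightarrow> (u@v, z) \<in> pres_rel S R" for z
  proof
    assume "\<exists>x. (u,x) \<in> pres_rel S R \<and> (\<exists>y. (v,y) \<in> pres_rel S R \<and> (x@y,z) \<in> pres_rel S R)"
    then obtain x y where xy: "(u,x) \<in> pres_rel S R" "(v,y) \<in> pres_rel S R" "(x@y,z) \<in> pres_rel S R" by blast
    have "(u@v, x@v) \<in> pres_rel S R" using xy assms by (intro pres_rel_cong_l) auto
    moreover have "(x@v, x@y) \<in> pres_rel S R" using xy pres_rel_words[OF xy(1)] by (intro pres_rel_cong_r) auto
    ultimately show "(u@v, z) \<in> pres_rel S R" using xy by (blast intro: pres_rel.trans)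
  next
    assume "(u@v, z) \<in> pres_rel S R"
    then show "\<exists>x. (u,x) \<in> pres_rel S R \<and> (\<exists>y. (v,y) \<in> pres_rel S R \<and> (x@y,z) \<in> pres_rel S R)"
      using assms by (intro exI[of _ u] conjI exI[of _ v]) (auto intro: pres_rel.refl)
  qed
  then show ?thesis
    unfolding presented_group_def word_class_def by (simp add: Bex_def Image_singleton)
qed

lemma word_inv_words: "set w \<subseteq> S \<times> UNIV \<Longrightarrow> set (word_inv w) \<subseteq> S \<times> UNIV"
  by (auto simp: word_inv_def inv_letter_def mem_Times_iff)

lemma word_inv_inv [simp]: "word_inv (word_inv w) = w"
  by (simp add: word_inv_def rev_map inv_letter_def comp_def)

lemma word_inv_Cons: "word_inv (l # w) = word_inv w @ [inv_letter l]"
  by (simp add: word_inv_def)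

lemma word_inv_append: "word_inv (u @ v) = word_inv v @ word_inv u"
  by (simp add: word_inv_def)

lemma word_inv_cancel:
  "set w \<subseteq> S \<times> UNIV \<Longrightarrow> (w @ word_inv w, []) \<in> pres_rel S R"
proof (induction w)
  case Nil
  then show ?case by (auto simp: word_inv_def intro: pres_rel.refl)
next
  case (Cons l w)
  have l: "fst l \<in> S" using Cons.prems by (cases l) auto
  have w: "set w \<subseteq> S \<times> UNIV" using Cons.prems by auto
  have il: "set [inv_letter l] \<subseteq> S \<times> UNIV" using l by (cases l) (auto simp: inv_letter_def)
  have "([l] @ (w @ word_inv w) @ [inv_letter l], [l] @ [] @ [inv_letter l]) \<in> pres_rel S R"
    using Cons.IH[OF w] l il by (intro pres_rel_cong) (auto simp: mem_Times_iff)
  moreover have "([] @ [], [] @ [l, inv_letter l] @ []) \<in> pres_rel S R"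
    using l by (intro pres_rel.cancel) auto
  ultimately show ?case
    by (auto simp: word_inv_Cons intro: pres_rel.trans pres_rel.sym)
qed

lemma word_inv_cancel2:
  "set w \<subseteq> S \<times> UNIV \<Longrightarrow> (word_inv w @ w, []) \<in> pres_rel S R"
  using word_inv_cancel[of "word_inv w" S R] word_inv_words[of w S] by simp

lemma presented_group_carrier:
  "carrier (presented_group S R) = {word_class S R w | w. set w \<subseteq> S \<times> UNIV}"
  by (simp add: presented_group_def word_class_def)

lemma presented_group_one:
  "one (presented_group S R) = word_class S R []"
  by (simp add: presented_group_def word_class_def)

lemma word_class_carrier:
  "set u \<subseteq> S \<times> UNIV \<Longrightarrow> word_class S R u \<in> carrier (presented_group S R)"
  by (auto simp: presented_group_carrier)

lemma presented_group_is_group: "group (presented_group S R)"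
proof (rule groupI)
  fix x y assume "x \<in> carrier (presented_group S R)" "y \<in> carrier (presented_group S R)"
  then obtain u v where "x = word_class S R u" "y = word_class S R v" "set u \<subseteq> S \<times> UNIV" "set v \<subseteq> S \<times> UNIV"
    by (auto simp: presented_group_carrier)
  then show "x \<otimes>\<^bsub>presented_group S R\<^esub> y \<in> carrier (presented_group S R)"
    using word_class_carrier[of "u@v" S R] by (simp add: word_class_mult)
next
  show "\<one>\<^bsub>presented_group S R\<^esub> \<in> carrier (presented_group S R)"
    by (auto simp: presented_group_one presented_group_carrier)
next
  fix x y z assume "x \<in> carrier (presented_group S R)" "y \<in> carrier (presented_group S R)"
    "z \<in> carrier (presented_group S R)"
  then obtain u v w where "x = word_class S R u" "y = word_class S R v" "z = word_class S R w"
     "set u \<subseteq> S \<times> UNIV" "set v \<subseteq> S \<times> UNIV" "set w \<subseteq> S \<times> UNIV"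
    by (auto simp: presented_group_carrier)
  then show "x \<otimes>\<^bsub>presented_group S R\<^esub> y \<otimes>\<^bsub>presented_group S R\<^esub> z =
             x \<otimes>\<^bsub>presented_group S R\<^esub> (y \<otimes>\<^bsub>presented_group S R\<^esub> z)"
    by (simp add: word_class_mult)
next
  fix x assume "x \<in> carrier (presented_group S R)"
  then obtain u where "x = word_class S R u" "set u \<subseteq> S \<times> UNIV"
    by (auto simp: presented_group_carrier)
  then show "\<one>\<^bsub>presented_group S R\<^esub> \<otimes>\<^bsub>presented_group S R\<^esub> x = x"
    by (simp add: word_class_mult presented_group_one)
next
  fix x assume "x \<in> carrier (presented_group S R)"
  then obtain u where u: "x = word_class S R u" "set u \<subseteq> S \<times> UNIV"
    by (auto simp: presented_group_carrier)
  have "word_class S R (word_inv u) \<otimes>\<^bsub>presented_group S R\<^esub> x = \<one>\<^bsub>presented_group S R\<^esub>"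
    using u word_inv_words[OF u(2)] word_inv_cancel2[OF u(2)]
    by (simp add: word_class_mult presented_group_one word_class_eq_iff)
  moreover have "word_class S R (word_inv u) \<in> carrier (presented_group S R)"
    using word_inv_words[OF u(2)] by (auto simp: presented_group_carrier)
  ultimately show "\<exists>y\<in>carrier (presented_group S R). y \<otimes>\<^bsub>presented_group S R\<^esub> x = \<one>\<^bsub>presented_group S R\<^esub>"
    by blast
qed


lemma word_class_inv:
  assumes "set u \<subseteq> S \<times> UNIV"
  shows "inv\<^bsub>presented_group S R\<^esub> (word_class S R u) = word_class S R (word_inv u)"
proof -
  interpret group "presented_group S R" by (rule presented_group_is_group)
  show ?thesis
    using assms word_inv_words[OF assms] word_inv_cancel2[OF assms]
    by (intro inv_equality) (auto simp: word_class_mult presented_group_one word_class_eq_iff word_class_carrier)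
qed

lemma presented_group_generated:
  "carrier (presented_group S R) =
     generate (presented_group S R) ((\<lambda>x. word_class S R [(x,False)]) ` S)"
proof -
  interpret group "presented_group S R" by (rule presented_group_is_group)
  have gen_sub: "(\<lambda>x. word_class S R [(x,False)]) ` S \<subseteq> carrier (presented_group S R)"
    by (auto intro!: word_class_carrier)
  have "set w \<subseteq> S \<times> UNIV \<Longrightarrow> word_class S R w \<in> generate (presented_group S R) ((\<lambda>x. word_class S R [(x,False)]) ` S)" for w
  proof (induction w)
    case Nil
    then show ?case by (simp add: presented_group_one[symmetric] generate.one)
  next
    case (Cons l w)
    obtain x b where l: "l = (x,b)" by (cases l)
    have x: "x \<in> S" using Cons.prems l by auto
    have "word_class S R (l # w) = word_class S R [l] \<otimes>\<^bsub>presented_group S R\<^esub> word_class S R w"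
      using Cons.prems by (subst word_class_mult) auto
    moreover have "word_class S R [l] \<in> generate (presented_group S R) ((\<lambda>x. word_class S R [(x,False)]) ` S)"
    proof (cases b)
      case True
      have "word_class S R [l] = inv\<^bsub>presented_group S R\<^esub> (word_class S R [(x,False)])"
        using x True l by (subst word_class_inv) (auto simp: word_inv_def inv_letter_def)
      then show ?thesis using x by (auto intro: generate.inv)
    next
      case False
      then show ?thesis using x l by (auto intro: generate.incl)
    qed
    ultimately show ?case using Cons by (auto intro: generate.eng)
  qed
  then have "carrier (presented_group S R) \<subseteq> generate (presented_group S R) ((\<lambda>x. word_class S R [(x,False)]) ` S)"
    by (auto simp: presented_group_carrier)
  moreover have "generate (presented_group S R) ((\<lambda>x. word_class S R [(x,False)]) ` S) \<subseteq> carrier (presented_group S R)"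
    using generate_incl[OF gen_sub] .
  ultimately show ?thesis by blast
qed

definition ev :: "('k, 'm) monoid_scheme \<Rightarrow> ('a \<Rightarrow> 'k) \<Rightarrow> 'a word \<Rightarrow> 'k" where
  "ev K f w = foldr (\<lambda>l acc. (if snd l then inv\<^bsub>K\<^esub> (f (fst l)) else f (fst l)) \<otimes>\<^bsub>K\<^esub> acc) w \<one>\<^bsub>K\<^esub>"

lemma ev_Nil [simp]: "ev K f [] = \<one>\<^bsub>K\<^esub>" by (simp add: ev_def)
lemma ev_Cons [simp]: "ev K f (l # w) = (if snd l then inv\<^bsub>K\<^esub> (f (fst l)) else f (fst l)) \<otimes>\<^bsub>K\<^esub> ev K f w"
  by (simp add: ev_def)

context group
begin

lemma ev_closed: "f ` S \<subseteq> carrier G \<Longrightarrow> set w \<subseteq> S \<times> UNIV \<Longrightarrow> ev G f w \<in> carrier G"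
  by (induction w) auto

lemma ev_append: "f ` S \<subseteq> carrier G \<Longrightarrow> set u \<subseteq> S \<times> UNIV \<Longrightarrow> set v \<subseteq> S \<times> UNIV \<Longrightarrow>
   ev G f (u @ v) = ev G f u \<otimes> ev G f v"
  by (induction u) (auto simp: m_assoc ev_closed image_subset_iff)

lemma ev_respects:
  assumes "(u,v) \<in> pres_rel S R" "f ` S \<subseteq> carrier G" "\<And>r. r \<in> R \<Longrightarrow> set r \<subseteq> S \<times> UNIV \<Longrightarrow> ev G f r = \<one>"
  shows "ev G f u = ev G f v"
  using assms(1)
proof (induction rule: pres_rel.induct)
  case (relator u v r)
  then show ?case using assms(2,3) by (simp add: ev_append ev_closed)
next
  case (cancel u v l)
  have "f (fst l) \<in> carrier G" using cancel assms(2) by auto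
  then have "ev G f [l, inv_letter l] = \<one>"
    by (auto simp: inv_letter_def)
  moreover have ls: "set [l, inv_letter l] \<subseteq> S \<times> UNIV" using cancel by (cases l) (auto simp: inv_letter_def)
  have e1: "ev G f (u @ ([l, inv_letter l] @ v)) = ev G f u \<otimes> ev G f ([l, inv_letter l] @ v)"
    by (rule ev_append) (use cancel assms(2) ls in auto)
  have e2: "ev G f ([l, inv_letter l] @ v) = ev G f [l, inv_letter l] \<otimes> ev G f v"
    by (rule ev_append) (use cancel assms(2) ls in auto)
  have e3: "ev G f (u @ v) = ev G f u \<otimes> ev G f v"
    by (rule ev_append) (use cancel assms(2) ls in auto)
  have "ev G f v \<in> carrier G" using cancel assms(2) ev_closed by blast
  then show ?case using e1 e2 e3 calculation by (simp del: ev_Cons)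
qed auto

lemma presented_hom:
  assumes "f ` S \<subseteq> carrier G" "\<And>r. r \<in> R \<Longrightarrow> set r \<subseteq> S \<times> UNIV \<Longrightarrow> ev G f r = \<one>"
  shows "(\<lambda>U. the_elem (ev G f ` U)) \<in> hom (presented_group S R) G"
    and "set w \<subseteq> S \<times> UNIV \<Longrightarrow> the_elem (ev G f ` word_class S R w) = ev G f w"
proof -
  have key: "set w \<subseteq> S \<times> UNIV \<Longrightarrow> the_elem (ev G f ` word_class S R w) = ev G f w" for w
  proof -
    assume w: "set w \<subseteq> S \<times> UNIV"
    have "ev G f ` word_class S R w = {ev G f w}"
      using w ev_respects[OF _ assms] by (auto simp: word_class_def intro: pres_rel.refl)
    then show ?thesis by simp
  qed
  show "set w \<subseteq> S \<times> UNIV \<Longrightarrow> the_elem (ev G f ` word_class S R w) = ev G f w" by (rule key)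
  show "(\<lambda>U. the_elem (ev G f ` U)) \<in> hom (presented_group S R) G"
  proof (rule homI)
    fix x assume "x \<in> carrier (presented_group S R)"
    then obtain u where "x = word_class S R u" "set u \<subseteq> S \<times> UNIV" by (auto simp: presented_group_carrier)
    then show "the_elem (ev G f ` x) \<in> carrier G" using key ev_closed[OF assms(1)] by simp
  next
    fix x y assume "x \<in> carrier (presented_group S R)" "y \<in> carrier (presented_group S R)"
    then obtain u v where "x = word_class S R u" "set u \<subseteq> S \<times> UNIV" "y = word_class S R v" "set v \<subseteq> S \<times> UNIV"
      by (auto simp: presented_group_carrier)
    then show "the_elem (ev G f ` (x \<otimes>\<^bsub>presented_group S R\<^esub> y)) = the_elem (ev G f ` x) \<otimes> the_elem (ev G f ` y)"
      using key by (simp add: word_class_mult ev_append[OF assms(1)])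
  qed
qed

end


lemma (in group) hom_eq_on_generate:
  assumes "h1 \<in> hom G K" "h2 \<in> hom G K" "group K" "S \<subseteq> carrier G"
    "\<And>x. x \<in> S \<Longrightarrow> h1 x = h2 x" "x \<in> generate G S"
  shows "h1 x = h2 x"
  using assms(6)
proof (induction rule: generate.induct)
  case one
  then show ?case using assms by (simp add: hom_one group_hom.hom_one group_hom_axioms.intro group_hom_def is_group)
next
  case (incl h)
  then show ?case using assms by auto
next
  case (inv h)
  have "h1 (inv h) = inv\<^bsub>K\<^esub> (h1 h)" "h2 (inv h) = inv\<^bsub>K\<^esub> (h2 h)"
  proof -
    have "group_hom G K h1" "group_hom G K h2" using assms
      by (auto simp: group_hom_def group_hom_axioms_def is_group)
    then show "h1 (inv h) = inv\<^bsub>K\<^esub> (h1 h)" "h2 (inv h) = inv\<^bsub>K\<^esub> (h2 h)"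
      using inv assms(4) by (auto intro!: group_hom.hom_inv)
  qed
  moreover have "h1 h = h2 h" using inv assms(5) by auto
  ultimately show ?case by simp
next
  case (eng a b)
  have "a \<in> carrier G" "b \<in> carrier G" using eng generate_in_carrier assms(4) by auto
  then show ?case using eng assms by (simp add: hom_mult)
qed

lemma (in group) subgroup_all:
  assumes "subgroup T G" "S \<subseteq> T" "carrier G = generate G S" "x \<in> carrier G"
  shows "x \<in> T"
  using generate_subgroup_incl[OF assms(2,1)] assms(3,4) by auto

abbreviation "BG n g \<equiv> braid_group n g"
abbreviation "sgm n g i \<equiv> bgen_elem n g (Sig i)"
abbreviation "aa n g i \<equiv> bgen_elem n g (Ag i)"
abbreviation "bb n g i \<equiv> bgen_elem n g (Bg i)"

lemma B_group: "group (BG n g)"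
  unfolding braid_group_def by (rule presented_group_is_group)

lemma B_gen_carrier: "x \<in> braid_gens n g \<Longrightarrow> bgen_elem n g x \<in> carrier (BG n g)"
  unfolding braid_group_def bgen_elem_def gen_word_def by (rule word_class_carrier) auto

lemma B_generated: "carrier (BG n g) = generate (BG n g) (bgen_elem n g ` braid_gens n g)"
  unfolding braid_group_def bgen_elem_def gen_word_def
  by (rule presented_group_generated)

lemma B_gens_sub: "bgen_elem n g ` braid_gens n g \<subseteq> carrier (BG n g)"
  using B_gen_carrier by auto

lemma wc_Nil: "word_class (braid_gens n g) (braid_relators n g) [] = \<one>\<^bsub>BG n g\<^esub>"
  by (simp add: braid_group_def presented_group_one)

lemma wc_gen:
  "x \<in> braid_gens n g \<Longrightarrow> set w \<subseteq> braid_gens n g \<times> UNIV \<Longrightarrow>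
   word_class (braid_gens n g) (braid_relators n g) (gen_word x @ w) =
   bgen_elem n g x \<otimes>\<^bsub>BG n g\<^esub> word_class (braid_gens n g) (braid_relators n g) w"
  unfolding braid_group_def bgen_elem_def
  by (subst word_class_mult) (auto simp: gen_word_def)

lemma wc_geninv:
  "x \<in> braid_gens n g \<Longrightarrow> set w \<subseteq> braid_gens n g \<times> UNIV \<Longrightarrow>
   word_class (braid_gens n g) (braid_relators n g) (word_inv (gen_word x) @ w) =
   inv\<^bsub>BG n g\<^esub> (bgen_elem n g x) \<otimes>\<^bsub>BG n g\<^esub> word_class (braid_gens n g) (braid_relators n g) w"
proof -
  assume x: "x \<in> braid_gens n g" and w: "set w \<subseteq> braid_gens n g \<times> UNIV"
  have e: "word_inv (gen_word x) @ w = [(x,True)] @ w" by (simp add: gen_word_def word_inv_def inv_letter_def)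
  have "word_class (braid_gens n g) (braid_relators n g) [(x,True)] =
        inv\<^bsub>BG n g\<^esub> (bgen_elem n g x)"
    unfolding braid_group_def bgen_elem_def using x
    by (subst word_class_inv) (auto simp: gen_word_def word_inv_def inv_letter_def)
  then show ?thesis unfolding e using x w
    by (subst word_class_mult[symmetric]) (auto simp: braid_group_def)
qed

lemma B_rel:
  assumes "rel_word u v \<in> braid_relators n g" "set u \<subseteq> braid_gens n g \<times> UNIV" "set v \<subseteq> braid_gens n g \<times> UNIV"
  shows "word_class (braid_gens n g) (braid_relators n g) u = word_class (braid_gens n g) (braid_relators n g) v"
proof -
  let ?S = "braid_gens n g" and ?R = "braid_relators n g"
  interpret group "presented_group ?S ?R" by (rule presented_group_is_group)
  have r: "set (rel_word u v) \<subseteq> ?S \<times> UNIV" using assms word_inv_words[OF assms(3)] by (auto simp: rel_word_def)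
  have "([] @ [], [] @ rel_word u v @ []) \<in> pres_rel ?S ?R"
    using assms r by (intro pres_rel.relator) auto
  then have "word_class ?S ?R (rel_word u v) = \<one>\<^bsub>presented_group ?S ?R\<^esub>"
    by (simp add: presented_group_one word_class_eq_iff[symmetric])
  then have "word_class ?S ?R u \<otimes>\<^bsub>presented_group ?S ?R\<^esub> inv\<^bsub>presented_group ?S ?R\<^esub> (word_class ?S ?R v) = \<one>\<^bsub>presented_group ?S ?R\<^esub>"
    using assms word_inv_words[OF assms(3)]
    by (simp add: rel_word_def word_class_mult word_class_inv)
  then show ?thesis using assms
    by (metis inv_solve_right one_closed word_class_carrier l_one)
qed


lemma braid_gens_simps [simp]:
  "Sig i \<in> braid_gens n g \<longleftrightarrow> 1 \<le> i \<and> i \<le> n - 1"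
  "Ag i \<in> braid_gens n g \<longleftrightarrow> 1 \<le> i \<and> i \<le> g"
  "Bg i \<in> braid_gens n g \<longleftrightarrow> 1 \<le> i \<and> i \<le> g"
  by (auto simp: braid_gens_def)

lemma wc_single: "word_class (braid_gens n g) (braid_relators n g) (gen_word x) = bgen_elem n g x"
  by (simp add: bgen_elem_def)

lemma set_gen_word [simp]: "set (gen_word x) = {(x,False)}" by (simp add: gen_word_def)
lemma set_word_inv_gen_word [simp]: "set (word_inv (gen_word x)) = {(x,True)}"
  by (simp add: gen_word_def word_inv_def inv_letter_def)

lemmas wc_simps = wc_gen wc_geninv wc_single

context
  fixes n g :: nat
begin

interpretation B: group "BG n g" by (rule B_group)

lemma B_braid:
  assumes "1 \<le> i" "i \<le> n - 2"
  shows "sgm n g i \<otimes>\<^bsub>BG n g\<^esub> sgm n g (i+1) \<otimes>\<^bsub>BG n g\<^esub> sgm n g i =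
         sgm n g (i+1) \<otimes>\<^bsub>BG n g\<^esub> sgm n g i \<otimes>\<^bsub>BG n g\<^esub> sgm n g (i+1)"
proof -
  have "rel_word (gen_word (Sig i) @ gen_word (Sig (i+1)) @ gen_word (Sig i))
               (gen_word (Sig (i+1)) @ gen_word (Sig i) @ gen_word (Sig (i+1))) \<in> braid_relators n g"
    using assms unfolding braid_relators_def by blast
  note r = B_rel[OF this]
  have "i \<le> n - Suc 0 \<and> Suc i \<le> n - Suc 0" using assms by arith
  then show ?thesis using r assms
    by (simp add: wc_simps B.m_assoc B_gen_carrier)
qed

lemma B_comm_c:
  assumes "c \<in> {Ag i, Bg i}" "1 \<le> i" "i \<le> g" "2 \<le> j" "j \<le> n - 1"
  shows "bgen_elem n g c \<otimes>\<^bsub>BG n g\<^esub> sgm n g j = sgm n g j \<otimes>\<^bsub>BG n g\<^esub> bgen_elem n g c"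
proof -
  have "rel_word (gen_word c @ gen_word (Sig j)) (gen_word (Sig j) @ gen_word c) \<in> braid_relators n g"
    using assms unfolding braid_relators_def by blast
  from B_rel[OF this] assms show ?thesis
    by (auto simp add: wc_simps B.m_assoc B_gen_carrier)
qed

lemma B_ab:
  assumes "1 \<le> i" "i \<le> g" "3 \<le> n"
  shows "aa n g i \<otimes>\<^bsub>BG n g\<^esub> sgm n g 1 \<otimes>\<^bsub>BG n g\<^esub> bb n g i =
         sgm n g 1 \<otimes>\<^bsub>BG n g\<^esub> bb n g i \<otimes>\<^bsub>BG n g\<^esub> sgm n g 1 \<otimes>\<^bsub>BG n g\<^esub> aa n g i \<otimes>\<^bsub>BG n g\<^esub> sgm n g 1"
proof -
  have "rel_word (gen_word (Ag i) @ gen_word (Sig 1) @ gen_word (Bg i))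
               (gen_word (Sig 1) @ gen_word (Bg i) @ gen_word (Sig 1) @ gen_word (Ag i) @ gen_word (Sig 1)) \<in> braid_relators n g"
    using assms unfolding braid_relators_def by blast
  from B_rel[OF this] assms show ?thesis
    by (simp add: wc_simps B.m_assoc B_gen_carrier)
qed

lemma B_cc:
  assumes "1 \<le> j" "j < i" "i \<le> g" "ci \<in> {Ag i, Bg i}" "cj \<in> {Ag j, Bg j}" "3 \<le> n"
  shows "bgen_elem n g ci \<otimes>\<^bsub>BG n g\<^esub> inv\<^bsub>BG n g\<^esub> sgm n g 1 \<otimes>\<^bsub>BG n g\<^esub> bgen_elem n g cj \<otimes>\<^bsub>BG n g\<^esub> sgm n g 1 =
         inv\<^bsub>BG n g\<^esub> sgm n g 1 \<otimes>\<^bsub>BG n g\<^esub> bgen_elem n g cj \<otimes>\<^bsub>BG n g\<^esub> sgm n g 1 \<otimes>\<^bsub>BG n g\<^esub> bgen_elem n g ci"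
proof -
  have "rel_word (gen_word ci @ word_inv (gen_word (Sig 1)) @ gen_word cj @ gen_word (Sig 1))
               (word_inv (gen_word (Sig 1)) @ gen_word cj @ gen_word (Sig 1) @ gen_word ci) \<in> braid_relators n g"
    using assms unfolding braid_relators_def by blast
  from B_rel[OF this] assms show ?thesis
    by (auto simp add: wc_simps B.m_assoc B_gen_carrier)
qed

end


lemma ev_int: "ev integer_group \<phi> w = sum_list (map (\<lambda>l. if snd l then - \<phi> (fst l) else \<phi> (fst l)) w)"
  by (induction w) auto

lemma ev_int_word_inv: "ev integer_group \<phi> (word_inv w) = - ev integer_group \<phi> w"
  by (induction w) (auto simp: ev_int word_inv_def inv_letter_def)

lemma ev_int_append: "ev integer_group \<phi> (u @ w) = ev integer_group \<phi> u + ev integer_group \<phi> w"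
  by (simp add: ev_int)

lemma ev_int_relators:
  assumes "\<And>i. \<phi> (Sig i) = 0" "r \<in> braid_relators n g"
  shows "ev integer_group \<phi> r = 0"
  using assms(2) unfolding braid_relators_def
  by (auto simp: rel_word_def ev_int_append ev_int_word_inv gen_word_def assms(1))

definition expsum :: "nat \<Rightarrow> nat \<Rightarrow> (bgen \<Rightarrow> int) \<Rightarrow> bgen word set \<Rightarrow> int" where
  "expsum n g \<phi> = (\<lambda>U. the_elem (ev integer_group \<phi> ` U))"

lemma expsum_hom:
  assumes "\<And>i. \<phi> (Sig i) = 0"
  shows "expsum n g \<phi> \<in> hom (BG n g) integer_group"
  unfolding expsum_def braid_group_def
  by (rule group.presented_hom(1)[OF group_integer_group]) (auto intro: ev_int_relators assms)

lemma expsum_gen: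
  assumes "\<And>i. \<phi> (Sig i) = 0" "x \<in> braid_gens n g"
  shows "expsum n g \<phi> (bgen_elem n g x) = \<phi> x"
proof -
  have "the_elem (ev integer_group \<phi> ` word_class (braid_gens n g) (braid_relators n g) (gen_word x)) =
        ev integer_group \<phi> (gen_word x)"
    by (rule group.presented_hom(2)[OF group_integer_group]) (use assms in \<open>auto intro: ev_int_relators\<close>)
  then show ?thesis by (simp add: expsum_def bgen_elem_def gen_word_def)
qed

definition alpha :: "nat \<Rightarrow> nat \<Rightarrow> nat \<Rightarrow> bgen word set \<Rightarrow> int" where
  "alpha n g i = expsum n g (\<lambda>x. if x = Ag i then 1 else 0)"
definition beta :: "nat \<Rightarrow> nat \<Rightarrow> nat \<Rightarrow> bgen word set \<Rightarrow> int" where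
  "beta n g i = expsum n g (\<lambda>x. if x = Bg i then 1 else 0)"

lemma alpha_hom: "alpha n g i \<in> hom (BG n g) integer_group"
  unfolding alpha_def by (rule expsum_hom) auto
lemma beta_hom: "beta n g i \<in> hom (BG n g) integer_group"
  unfolding beta_def by (rule expsum_hom) auto

lemma alpha_gen: "x \<in> braid_gens n g \<Longrightarrow> alpha n g i (bgen_elem n g x) = (if x = Ag i then 1 else 0)"
  unfolding alpha_def by (rule expsum_gen) auto
lemma beta_gen: "x \<in> braid_gens n g \<Longrightarrow> beta n g i (bgen_elem n g x) = (if x = Bg i then 1 else 0)"
  unfolding beta_def by (rule expsum_gen) auto

lemma hom_scale_int:
  assumes "D \<in> hom G integer_group"
  shows "(\<lambda>y. c * D y) \<in> hom G integer_group"
  using assms by (auto simp: hom_def distrib_left)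

lemma hom_zero_int: "(\<lambda>y. 0::int) \<in> hom G integer_group"
  by (auto simp: hom_def)

context group
begin

lemma comm_inv_left:
  assumes "x \<in> carrier G" "y \<in> carrier G" "x \<otimes> y = y \<otimes> x"
  shows "inv x \<otimes> y = y \<otimes> inv x"
proof -
  have "inv x \<otimes> y = inv x \<otimes> (y \<otimes> x) \<otimes> inv x" using assms(1,2) by (simp add: m_assoc)
  also have "\<dots> = inv x \<otimes> (x \<otimes> y) \<otimes> inv x" by (simp only: assms(3))
  also have "\<dots> = y \<otimes> inv x" using assms(1,2) by (simp add: m_assoc[symmetric])
  finally show ?thesis .
qed

lemma comm_pow_nat:
  assumes "x \<in> carrier G" "y \<in> carrier G" "x \<otimes> y = y \<otimes> x"
  shows "x [^] (k::nat) \<otimes> y = y \<otimes> x [^] k"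
  by (rule group_commutes_pow[OF assms(3,1,2)])

lemma comm_pow_int:
  assumes "x \<in> carrier G" "y \<in> carrier G" "x \<otimes> y = y \<otimes> x"
  shows "x [^] (k::int) \<otimes> y = y \<otimes> x [^] k"
proof (cases "k < 0")
  case False
  then have "x [^] k = x [^] (nat k)"
    using int_pow_int[where x=x and n="nat k" and G=G] by simp
  then show ?thesis using comm_pow_nat[OF assms, of "nat k"] by simp
next
  case True
  then have e: "x [^] k = inv (x [^] (nat (-k)))"
    using int_pow_neg_int[of x "nat (-k)"] assms(1) by simp
  have c: "x [^] (nat (-k)) \<otimes> y = y \<otimes> x [^] (nat (-k))" by (rule comm_pow_nat[OF assms])
  show ?thesis unfolding e
    by (rule comm_inv_left[OF _ assms(2) c]) (use assms(1) in simp)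
qed

definition tw :: "'a \<Rightarrow> 'a \<Rightarrow> 'a \<Rightarrow> bool" where
  "tw z a b \<longleftrightarrow> a \<otimes> b = z \<otimes> b \<otimes> a"

lemma tw_sym:
  assumes "z \<in> carrier G" "a \<in> carrier G" "b \<in> carrier G" "tw z a b"
  shows "tw (inv z) b a"
proof -
  have e: "a \<otimes> b = z \<otimes> b \<otimes> a" using assms(4) unfolding tw_def .
  have "inv z \<otimes> a \<otimes> b = inv z \<otimes> (a \<otimes> b)" using assms(1-3) by (simp add: m_assoc)
  also have "\<dots> = inv z \<otimes> (z \<otimes> b \<otimes> a)" by (simp only: e)
  also have "\<dots> = b \<otimes> a" using assms(1-3) by (simp add: m_assoc[symmetric])
  finally show ?thesis unfolding tw_def by simp
qed

lemma tw_mult_left: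
  assumes "z1 \<in> carrier G" "z2 \<in> carrier G" "x1 \<in> carrier G" "x2 \<in> carrier G" "y \<in> carrier G"
    "z2 \<otimes> x1 = x1 \<otimes> z2" "tw z1 x1 y" "tw z2 x2 y"
  shows "tw (z2 \<otimes> z1) (x1 \<otimes> x2) y"
proof -
  have e1: "x1 \<otimes> y = z1 \<otimes> y \<otimes> x1" using assms(7) unfolding tw_def .
  have e2: "x2 \<otimes> y = z2 \<otimes> y \<otimes> x2" using assms(8) unfolding tw_def .
  have "x1 \<otimes> x2 \<otimes> y = x1 \<otimes> (x2 \<otimes> y)" using assms(1-5) by (simp add: m_assoc)
  also have "\<dots> = x1 \<otimes> (z2 \<otimes> y \<otimes> x2)" by (simp only: e2)
  also have "\<dots> = (x1 \<otimes> z2) \<otimes> y \<otimes> x2" using assms(1-5) by (simp add: m_assoc)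
  also have "\<dots> = (z2 \<otimes> x1) \<otimes> y \<otimes> x2" by (metis assms(6))
  also have "\<dots> = z2 \<otimes> (x1 \<otimes> y) \<otimes> x2" using assms(1-5) by (simp add: m_assoc)
  also have "\<dots> = z2 \<otimes> (z1 \<otimes> y \<otimes> x1) \<otimes> x2" by (simp only: e1)
  also have "\<dots> = z2 \<otimes> z1 \<otimes> y \<otimes> (x1 \<otimes> x2)" using assms(1-5) by (simp add: m_assoc)
  finally show ?thesis by (simp add: tw_def)
qed

lemma tw_inv_left:
  assumes "z \<in> carrier G" "x \<in> carrier G" "y \<in> carrier G" "z \<otimes> x = x \<otimes> z" "tw z x y"
  shows "tw (inv z) (inv x) y"
proof -
  have e: "x \<otimes> y = z \<otimes> y \<otimes> x" using assms(5) unfolding tw_def .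
  have "y \<otimes> inv x = inv x \<otimes> (x \<otimes> y) \<otimes> inv x" using assms(1-3) by (simp add: m_assoc[symmetric])
  also have "\<dots> = inv x \<otimes> (z \<otimes> y \<otimes> x) \<otimes> inv x" by (simp only: e)
  also have "\<dots> = (inv x \<otimes> z) \<otimes> y" using assms(1-3) by (simp add: m_assoc)
  also have "\<dots> = z \<otimes> inv x \<otimes> y" by (metis comm_inv_left[OF assms(2,1) assms(4)[symmetric]])
  finally have e2: "y \<otimes> inv x = z \<otimes> (inv x \<otimes> y)" using assms(1-3) by (simp add: m_assoc)
  have "inv z \<otimes> y \<otimes> inv x = inv z \<otimes> (z \<otimes> (inv x \<otimes> y))" using e2 assms(1-3) by (simp add: m_assoc)
  also have "\<dots> = inv x \<otimes> y" using assms(1-3) by (simp add: m_assoc[symmetric])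
  finally show ?thesis by (simp add: tw_def)
qed

end



lemma (in group) comm_mult_left:
  assumes "a \<in> carrier G" "b \<in> carrier G" "c \<in> carrier G" "a \<otimes> c = c \<otimes> a" "b \<otimes> c = c \<otimes> b"
  shows "a \<otimes> b \<otimes> c = c \<otimes> (a \<otimes> b)"
proof -
  have "a \<otimes> b \<otimes> c = a \<otimes> (b \<otimes> c)" using assms(1-3) by (simp add: m_assoc)
  also have "\<dots> = a \<otimes> (c \<otimes> b)" by (simp only: assms(5))
  also have "\<dots> = (a \<otimes> c) \<otimes> b" using assms(1-3) by (simp add: m_assoc)
  also have "\<dots> = (c \<otimes> a) \<otimes> b" by (simp only: assms(4))
  finally show ?thesis using assms(1-3) by (simp add: m_assoc)
qed

lemma (in group) tw_one_comm:
  assumes "a \<in> carrier G" "b \<in> carrier G" "a \<otimes> b = b \<otimes> a"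
  shows "tw \<one> a b" "tw (x [^] (0::int)) a b"
  using assms by (auto simp: tw_def)

locale tgt = K: group K for K (structure) +
  fixes n g :: nat and f :: "bgen word set \<Rightarrow> 'a" and s :: 'a
  assumes g1: "1 \<le> g" and n3: "3 \<le> n"
    and fhom: "f \<in> hom (BG n g) K"
    and fsig: "\<And>i. 1 \<le> i \<Longrightarrow> i \<le> n - 1 \<Longrightarrow> f (sgm n g i) = s"
begin

sublocale B: group "BG n g" by (rule B_group)
sublocale fh: group_hom "BG n g" K f
  by (simp add: group_hom_def group_hom_axioms_def B.is_group K.is_group fhom)

lemma fK: "x \<in> carrier (BG n g) \<Longrightarrow> f x \<in> carrier K"
  by (rule fh.hom_closed)

lemma fgen: "x \<in> braid_gens n g \<Longrightarrow> f (bgen_elem n g x) \<in> carrier K"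
  by (rule fK[OF B_gen_carrier])

lemma sig1: "f (sgm n g 1) = s" using fsig n3 by auto

lemma s_carr: "s \<in> carrier K"
  using fgen[of "Sig 1"] n3 sig1 by auto

lemma A_carr: "1 \<le> i \<Longrightarrow> i \<le> g \<Longrightarrow> f (aa n g i) \<in> carrier K" by (rule fgen) simp
lemma Bb_carr: "1 \<le> i \<Longrightarrow> i \<le> g \<Longrightarrow> f (bb n g i) \<in> carrier K" by (rule fgen) simp

lemma L1:
  assumes "c \<in> {Ag i, Bg i}" "1 \<le> i" "i \<le> g"
  shows "f (bgen_elem n g c) \<otimes> s = s \<otimes> f (bgen_elem n g c)"
proof -
  have "f (bgen_elem n g c \<otimes>\<^bsub>BG n g\<^esub> sgm n g 2) = f (sgm n g 2 \<otimes>\<^bsub>BG n g\<^esub> bgen_elem n g c)"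
    using B_comm_c[OF assms, of 2] n3 by simp
  moreover have "f (sgm n g 2) = s" using fsig n3 by simp
  moreover have "bgen_elem n g c \<in> carrier (BG n g)" "sgm n g 2 \<in> carrier (BG n g)"
    using assms n3 by (auto intro!: B_gen_carrier)
  ultimately show ?thesis by simp
qed

lemma s_central: "y \<in> carrier (BG n g) \<Longrightarrow> f y \<otimes> s = s \<otimes> f y"
proof -
  let ?T = "{y \<in> carrier (BG n g). f y \<otimes> s = s \<otimes> f y}"
  have sub: "subgroup ?T (BG n g)"
  proof (rule B.subgroupI)
    show "?T \<noteq> {}" using s_carr by (auto intro!: exI[of _ "\<one>\<^bsub>BG n g\<^esub>"])
  next
    fix a assume a: "a \<in> ?T"
    then have "inv (f a) \<otimes> s = s \<otimes> inv (f a)"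
      using K.comm_inv_left[of "f a" s] fK s_carr by blast
    then show "inv\<^bsub>BG n g\<^esub> a \<in> ?T" using a by (simp add: fh.hom_inv)
  next
    fix a b assume ab: "a \<in> ?T" "b \<in> ?T"
    then have "f a \<otimes> f b \<otimes> s = s \<otimes> (f a \<otimes> f b)"
      using K.comm_mult_left[of "f a" "f b" s] fK s_carr by blast
    then show "a \<otimes>\<^bsub>BG n g\<^esub> b \<in> ?T" using ab by simp
  qed auto
  have gens: "bgen_elem n g ` braid_gens n g \<subseteq> ?T"
  proof
    fix y assume "y \<in> bgen_elem n g ` braid_gens n g"
    then obtain x where x: "x \<in> braid_gens n g" "y = bgen_elem n g x" by auto
    show "y \<in> ?T"
    proof (cases x)
      case (Sig i)
      then show ?thesis using x fsig B_gen_carrier by auto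
    next
      case (Ag i)
      then show ?thesis using x L1[of x i] B_gen_carrier by auto
    next
      case (Bg i)
      then show ?thesis using x L1[of x i] B_gen_carrier by auto
    qed
  qed
  assume "y \<in> carrier (BG n g)"
  then show ?thesis using B.subgroup_all[OF sub gens B_generated] by auto
qed

lemma spow_carr: "s [^] (k::int) \<in> carrier K" using s_carr by simp

lemma spow_central:
  assumes y: "y \<in> carrier (BG n g)" shows "s [^] (k::int) \<otimes> f y = f y \<otimes> s [^] k"
proof -
  have "s \<otimes> f y = f y \<otimes> s" by (rule s_central[OF y, symmetric])
  then show ?thesis by (rule K.comm_pow_int[OF s_carr fK[OF y]])
qed

lemma s2: "s [^] (2::int) = s \<otimes> s"
  using int_pow_int[where x=s and n=2 and G=K] s_carr by (simp add: numeral_2_eq_2)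

lemma L3:
  assumes "1 \<le> i" "i \<le> g"
  shows "f (aa n g i) \<otimes> f (bb n g i) = s [^] (2::int) \<otimes> f (bb n g i) \<otimes> f (aa n g i)"
proof -
  let ?A = "f (aa n g i)" and ?B = "f (bb n g i)"
  have c: "?A \<in> carrier K" "?B \<in> carrier K" using A_carr Bb_carr assms by auto
  have cA: "?A \<otimes> s = s \<otimes> ?A" using L1[of "Ag i" i] assms by auto
  have cB: "?B \<otimes> s = s \<otimes> ?B" using L1[of "Bg i" i] assms by auto
  have "f (aa n g i \<otimes>\<^bsub>BG n g\<^esub> sgm n g 1 \<otimes>\<^bsub>BG n g\<^esub> bb n g i) =
        f (sgm n g 1 \<otimes>\<^bsub>BG n g\<^esub> bb n g i \<otimes>\<^bsub>BG n g\<^esub> sgm n g 1 \<otimes>\<^bsub>BG n g\<^esub> aa n g i \<otimes>\<^bsub>BG n g\<^esub> sgm n g 1)"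
    using B_ab[OF assms n3] by simp
  then have e: "?A \<otimes> s \<otimes> ?B = s \<otimes> ?B \<otimes> s \<otimes> ?A \<otimes> s"
    using assms n3 sig1 by (simp add: B_gen_carrier)
  have "s \<otimes> (?A \<otimes> ?B) = (s \<otimes> ?A) \<otimes> ?B" using c s_carr by (simp add: K.m_assoc)
  also have "\<dots> = (?A \<otimes> s) \<otimes> ?B" by (simp only: cA)
  also have "\<dots> = s \<otimes> ?B \<otimes> s \<otimes> ?A \<otimes> s" by (rule e)
  also have "\<dots> = s \<otimes> (?B \<otimes> s) \<otimes> (?A \<otimes> s)" using c s_carr by (simp add: K.m_assoc)
  also have "\<dots> = s \<otimes> (s \<otimes> ?B) \<otimes> (s \<otimes> ?A)" by (simp only: cA cB)
  also have "\<dots> = s \<otimes> (s \<otimes> (?B \<otimes> s) \<otimes> ?A)" using c s_carr by (simp add: K.m_assoc)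
  also have "\<dots> = s \<otimes> (s \<otimes> (s \<otimes> ?B) \<otimes> ?A)" by (simp only: cB)
  also have "\<dots> = s \<otimes> (s \<otimes> s \<otimes> ?B \<otimes> ?A)" using c s_carr by (simp add: K.m_assoc)
  finally have fin: "s \<otimes> (?A \<otimes> ?B) = s \<otimes> (s \<otimes> s \<otimes> ?B \<otimes> ?A)" .
  have cc: "?A \<otimes> ?B \<in> carrier K" "s \<otimes> s \<otimes> ?B \<otimes> ?A \<in> carrier K" using c s_carr by auto
  have "?A \<otimes> ?B = s \<otimes> s \<otimes> ?B \<otimes> ?A" by (rule K.l_cancel[OF fin cc s_carr])
  then show ?thesis by (simp add: s2)
qed

lemma L4:
  assumes "c1 \<in> {Ag i, Bg i}" "c2 \<in> {Ag j, Bg j}" "1 \<le> i" "i \<le> g" "1 \<le> j" "j \<le> g" "i \<noteq> j"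
  shows "f (bgen_elem n g c1) \<otimes> f (bgen_elem n g c2) = f (bgen_elem n g c2) \<otimes> f (bgen_elem n g c1)"
proof -
  have key: "f (bgen_elem n g ci) \<otimes> f (bgen_elem n g cj) = f (bgen_elem n g cj) \<otimes> f (bgen_elem n g ci)"
    if h: "ci \<in> {Ag i', Bg i'}" "cj \<in> {Ag j', Bg j'}" "1 \<le> j'" "j' < i'" "i' \<le> g" for ci cj i' j'
  proof -
    let ?I = "f (bgen_elem n g ci)" and ?J = "f (bgen_elem n g cj)"
    have gi: "ci \<in> braid_gens n g" "cj \<in> braid_gens n g" using h by auto
    have c: "?I \<in> carrier K" "?J \<in> carrier K" using fgen gi by auto
    have sJ: "?J \<otimes> s = s \<otimes> ?J" using L1[of cj j'] h by auto
    have "f (bgen_elem n g ci \<otimes>\<^bsub>BG n g\<^esub> inv\<^bsub>BG n g\<^esub> sgm n g 1 \<otimes>\<^bsub>BG n g\<^esub> bgen_elem n g cj \<otimes>\<^bsub>BG n g\<^esub> sgm n g 1) =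
          f (inv\<^bsub>BG n g\<^esub> sgm n g 1 \<otimes>\<^bsub>BG n g\<^esub> bgen_elem n g cj \<otimes>\<^bsub>BG n g\<^esub> sgm n g 1 \<otimes>\<^bsub>BG n g\<^esub> bgen_elem n g ci)"
      using B_cc[OF h(3,4,5,1,2) n3] by simp
    then have e: "?I \<otimes> inv s \<otimes> ?J \<otimes> s = inv s \<otimes> ?J \<otimes> s \<otimes> ?I"
      using gi n3 sig1 B_gen_carrier[of "Sig 1"] by (simp add: B_gen_carrier fh.hom_inv)
    have "inv s \<otimes> ?J \<otimes> s = inv s \<otimes> (?J \<otimes> s)" using c s_carr by (simp add: K.m_assoc)
    also have "\<dots> = inv s \<otimes> (s \<otimes> ?J)" by (simp only: sJ)
    also have "\<dots> = ?J" using c s_carr by (simp add: K.m_assoc[symmetric])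
    finally have m: "inv s \<otimes> ?J \<otimes> s = ?J" .
    have "?I \<otimes> inv s \<otimes> ?J \<otimes> s = ?I \<otimes> (inv s \<otimes> ?J \<otimes> s)" using c s_carr by (simp add: K.m_assoc)
    then show ?thesis using e m by simp
  qed
  show ?thesis
  proof (cases "j < i")
    case True
    then show ?thesis using key[of c1 i c2 j] assms by auto
  next
    case False
    then have "i < j" using assms by auto
    then show ?thesis using key[of c2 j c1 i] assms by auto
  qed
qed

end


context tgt
begin

lemma tw_cl_mult:
  assumes "a \<in> carrier (BG n g)" "b \<in> carrier (BG n g)" "c \<in> carrier K"
    "K.tw (s [^] (ka::int)) (f a) c" "K.tw (s [^] (kb::int)) (f b) c"
  shows "K.tw (s [^] (ka + kb)) (f (a \<otimes>\<^bsub>BG n g\<^esub> b)) c"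
proof -
  have "K.tw (s [^] kb \<otimes> s [^] ka) (f a \<otimes> f b) c"
    by (rule K.tw_mult_left[OF spow_carr spow_carr fK fK assms(3) spow_central assms(4,5)]) (use assms in auto)
  moreover have "s [^] kb \<otimes> s [^] ka = s [^] (ka + kb)"
    using K.int_pow_mult[OF s_carr, of kb ka] by (simp add: add.commute)
  ultimately show ?thesis using assms by simp
qed

lemma tw_cl_inv:
  assumes "a \<in> carrier (BG n g)" "c \<in> carrier K" "K.tw (s [^] (k::int)) (f a) c"
  shows "K.tw (s [^] (- k)) (f (inv\<^bsub>BG n g\<^esub> a)) c"
proof -
  have "K.tw (inv (s [^] k)) (inv (f a)) c"
    by (rule K.tw_inv_left[OF spow_carr fK assms(2) spow_central assms(3)]) (use assms in auto)
  then show ?thesis using assms by (simp add: K.int_pow_neg[OF s_carr] fh.hom_inv)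
qed

lemma tw_cl_one:
  assumes "c \<in> carrier K"
  shows "K.tw (s [^] (0::int)) (f \<one>\<^bsub>BG n g\<^esub>) c"
  using assms by (simp add: K.tw_def)

lemma TLem:
  assumes c: "c \<in> carrier (BG n g)" and D: "D \<in> hom (BG n g) integer_group"
    and gens: "\<And>x. x \<in> braid_gens n g \<Longrightarrow> K.tw (s [^] D (bgen_elem n g x)) (f (bgen_elem n g x)) (f c)"
    and y: "y \<in> carrier (BG n g)"
  shows "K.tw (s [^] D y) (f y) (f c)"
proof -
  interpret Dh: group_hom "BG n g" integer_group D
    by (simp add: group_hom_def group_hom_axioms_def B.is_group D)
  let ?T = "{y \<in> carrier (BG n g). K.tw (s [^] D y) (f y) (f c)}"
  have fc: "f c \<in> carrier K" using fK c by auto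
  have sub: "subgroup ?T (BG n g)"
  proof (rule B.subgroupI)
    show "?T \<noteq> {}" using tw_cl_one[OF fc] Dh.hom_one by (auto intro!: exI[of _ "\<one>\<^bsub>BG n g\<^esub>"])
  next
    fix a assume a: "a \<in> ?T"
    then have "K.tw (s [^] (- D a)) (f (inv\<^bsub>BG n g\<^esub> a)) (f c)" using tw_cl_inv fc by auto
    moreover have "D (inv\<^bsub>BG n g\<^esub> a) = - D a" using a Dh.hom_inv by auto
    ultimately show "inv\<^bsub>BG n g\<^esub> a \<in> ?T" using a by auto
  next
    fix a b assume ab: "a \<in> ?T" "b \<in> ?T"
    then have "K.tw (s [^] (D a + D b)) (f (a \<otimes>\<^bsub>BG n g\<^esub> b)) (f c)" using tw_cl_mult fc by auto
    moreover have "D (a \<otimes>\<^bsub>BG n g\<^esub> b) = D a + D b" using ab Dh.hom_mult by auto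
    ultimately show "a \<otimes>\<^bsub>BG n g\<^esub> b \<in> ?T" using ab by auto
  qed auto
  have "bgen_elem n g ` braid_gens n g \<subseteq> ?T" using gens B_gen_carrier by auto
  then show ?thesis using B.subgroup_all[OF sub _ B_generated y] by auto
qed

lemma comm_tw:
  assumes "a \<in> carrier K" "b \<in> carrier K" "a \<otimes> b = b \<otimes> a"
  shows "K.tw (s [^] (0::int)) a b"
  using assms by (simp add: K.tw_def)

lemma twB:
  assumes i: "1 \<le> i" "i \<le> g" and y: "y \<in> carrier (BG n g)"
  shows "K.tw (s [^] (2 * alpha n g i y)) (f y) (f (bb n g i))"
proof (rule TLem[OF B_gen_carrier hom_scale_int[OF alpha_hom] _ y])
  show "Bg i \<in> braid_gens n g" using i by simp
  fix x assume x: "x \<in> braid_gens n g"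
  have Bc: "f (bb n g i) \<in> carrier K" using Bb_carr i by auto
  show "K.tw (s [^] (2 * alpha n g i (bgen_elem n g x))) (f (bgen_elem n g x)) (f (bb n g i))"
  proof (cases x)
    case (Sig j)
    then have "f (bgen_elem n g x) = s" using x fsig by auto
    moreover have "s \<otimes> f (bb n g i) = f (bb n g i) \<otimes> s" using L1[of "Bg i" i] i by auto
    ultimately show ?thesis using comm_tw[OF s_carr Bc] x Sig by (simp add: alpha_gen)
  next
    case (Ag j)
    show ?thesis
    proof (cases "j = i")
      case True
      then show ?thesis using L3[OF i] x Ag by (simp add: alpha_gen K.tw_def)
    next
      case False
      have "f (bgen_elem n g x) \<otimes> f (bb n g i) = f (bb n g i) \<otimes> f (bgen_elem n g x)"
        using L4[of x j "Bg i" i] Ag x i False by auto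
      then show ?thesis using comm_tw[OF fgen[OF x] Bc] x Ag False by (simp add: alpha_gen)
    qed
  next
    case (Bg j)
    have "f (bgen_elem n g x) \<otimes> f (bb n g i) = f (bb n g i) \<otimes> f (bgen_elem n g x)"
    proof (cases "j = i")
      case True then show ?thesis using Bg by simp
    next
      case False then show ?thesis using L4[of x j "Bg i" i] Bg x i by auto
    qed
    then show ?thesis using comm_tw[OF fgen[OF x] Bc] x Bg by (simp add: alpha_gen)
  qed
qed

lemma twA:
  assumes i: "1 \<le> i" "i \<le> g" and y: "y \<in> carrier (BG n g)"
  shows "K.tw (s [^] (-2 * beta n g i y)) (f y) (f (aa n g i))"
proof (rule TLem[OF B_gen_carrier hom_scale_int[OF beta_hom] _ y])
  show "Ag i \<in> braid_gens n g" using i by simp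
  fix x assume x: "x \<in> braid_gens n g"
  have Ac: "f (aa n g i) \<in> carrier K" using A_carr i by auto
  show "K.tw (s [^] (-2 * beta n g i (bgen_elem n g x))) (f (bgen_elem n g x)) (f (aa n g i))"
  proof (cases x)
    case (Sig j)
    then have "f (bgen_elem n g x) = s" using x fsig by auto
    moreover have "s \<otimes> f (aa n g i) = f (aa n g i) \<otimes> s" using L1[of "Ag i" i] i by auto
    ultimately show ?thesis using comm_tw[OF s_carr Ac] x Sig by (simp add: beta_gen)
  next
    case (Bg j)
    show ?thesis
    proof (cases "j = i")
      case True
      have "K.tw (inv (s [^] (2::int))) (f (bb n g i)) (f (aa n g i))"
        using K.tw_sym[OF spow_carr Ac Bb_carr[OF i]] L3[OF i] by (simp add: K.tw_def)
      then show ?thesis using x Bg True by (simp add: beta_gen K.int_pow_neg[OF s_carr])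
    next
      case False
      have "f (bgen_elem n g x) \<otimes> f (aa n g i) = f (aa n g i) \<otimes> f (bgen_elem n g x)"
        using L4[of x j "Ag i" i] Bg x i False by auto
      then show ?thesis using comm_tw[OF fgen[OF x] Ac] x Bg False by (simp add: beta_gen)
    qed
  next
    case (Ag j)
    have "f (bgen_elem n g x) \<otimes> f (aa n g i) = f (aa n g i) \<otimes> f (bgen_elem n g x)"
    proof (cases "j = i")
      case True then show ?thesis using Ag by simp
    next
      case False then show ?thesis using L4[of x j "Ag i" i] Ag x i by auto
    qed
    then show ?thesis using comm_tw[OF fgen[OF x] Ac] x Ag by (simp add: beta_gen)
  qed
qed

lemma Comm:
  assumes x: "x \<in> carrier (BG n g)" and y: "y \<in> carrier (BG n g)"
  shows "\<exists>k::int. K.tw (s [^] k) (f x) (f y)"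
proof -
  let ?T = "{x \<in> carrier (BG n g). \<exists>k::int. K.tw (s [^] k) (f x) (f y)}"
  have fy: "f y \<in> carrier K" using fK y by auto
  have sub: "subgroup ?T (BG n g)"
  proof (rule B.subgroupI)
    have "\<one>\<^bsub>BG n g\<^esub> \<in> ?T" using tw_cl_one[OF fy] B.one_closed by blast
    then show "?T \<noteq> {}" by blast
  next
    fix a assume a: "a \<in> ?T"
    then show "inv\<^bsub>BG n g\<^esub> a \<in> ?T" using tw_cl_inv fy by blast
  next
    fix a b assume ab: "a \<in> ?T" "b \<in> ?T"
    then show "a \<otimes>\<^bsub>BG n g\<^esub> b \<in> ?T" using tw_cl_mult fy by blast
  qed auto
  have "bgen_elem n g ` braid_gens n g \<subseteq> ?T"
  proof
    fix z assume "z \<in> bgen_elem n g ` braid_gens n g"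
    then obtain x0 where x0: "x0 \<in> braid_gens n g" "z = bgen_elem n g x0" by auto
    have "\<exists>k::int. K.tw (s [^] k) (f z) (f y)"
    proof (cases x0)
      case (Sig j)
      then have "f z = s" using x0 fsig by auto
      then show ?thesis using comm_tw[OF s_carr fy] s_central[OF y] by metis
    next
      case (Ag i)
      have "K.tw (inv (s [^] (-2 * beta n g i y))) (f z) (f y)"
        using K.tw_sym[OF spow_carr fy fgen[OF x0(1)]] twA[of i y] Ag x0 y by auto
      then show ?thesis using K.int_pow_neg[OF s_carr] by metis
    next
      case (Bg i)
      have "K.tw (inv (s [^] (2 * alpha n g i y))) (f z) (f y)"
        using K.tw_sym[OF spow_carr fy fgen[OF x0(1)]] twB[of i y] Bg x0 y by auto
      then show ?thesis using K.int_pow_neg[OF s_carr] by metis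
    qed
    then show "z \<in> ?T" using x0 B_gen_carrier by auto
  qed
  then show ?thesis using B.subgroup_all[OF sub _ B_generated x] by auto
qed

end


context tgt
begin

definition N2 where "N2 = {y \<in> carrier (BG n g). \<exists>k::int. f y = s [^] k}"

lemma N2_sub: "N2 \<subseteq> carrier (BG n g)" by (auto simp: N2_def)

lemma N2_subgroup: "subgroup N2 (BG n g)"
proof (rule B.subgroupI)
  show "N2 \<subseteq> carrier (BG n g)" by (rule N2_sub)
  have "\<one>\<^bsub>BG n g\<^esub> \<in> N2" unfolding N2_def by (auto intro!: exI[of _ 0])
  then show "N2 \<noteq> {}" by blast
next
  fix a assume "a \<in> N2"
  then obtain k where a: "a \<in> carrier (BG n g)" "f a = s [^] (k::int)" by (auto simp: N2_def)
  then have "f (inv\<^bsub>BG n g\<^esub> a) = s [^] (- k)" by (simp add: fh.hom_inv K.int_pow_neg[OF s_carr])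
  then show "inv\<^bsub>BG n g\<^esub> a \<in> N2" using a by (auto simp: N2_def)
next
  fix a b assume "a \<in> N2" "b \<in> N2"
  then obtain k l where a: "a \<in> carrier (BG n g)" "f a = s [^] (k::int)" "b \<in> carrier (BG n g)" "f b = s [^] (l::int)"
    by (auto simp: N2_def)
  then have "f (a \<otimes>\<^bsub>BG n g\<^esub> b) = s [^] (k + l)" by (simp add: K.int_pow_mult[OF s_carr])
  then show "a \<otimes>\<^bsub>BG n g\<^esub> b \<in> N2" using a by (auto simp: N2_def)
qed

lemma N2_normal: "N2 \<lhd> BG n g"
proof (rule B.normal_invI[OF N2_subgroup])
  fix x h assume x: "x \<in> carrier (BG n g)" and "h \<in> N2"
  then obtain k where h: "h \<in> carrier (BG n g)" "f h = s [^] (k::int)" by (auto simp: N2_def)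
  have "f (x \<otimes>\<^bsub>BG n g\<^esub> h \<otimes>\<^bsub>BG n g\<^esub> inv\<^bsub>BG n g\<^esub> x) = f x \<otimes> s [^] k \<otimes> inv (f x)"
    using x h by (simp add: fh.hom_inv)
  also have "\<dots> = s [^] k \<otimes> f x \<otimes> inv (f x)" by (simp only: spow_central[OF x, symmetric])
  also have "\<dots> = s [^] k" using fK[OF x] spow_carr by (simp add: K.m_assoc)
  finally show "x \<otimes>\<^bsub>BG n g\<^esub> h \<otimes>\<^bsub>BG n g\<^esub> inv\<^bsub>BG n g\<^esub> x \<in> N2"
    using x h by (auto simp: N2_def)
qed

lemma N2_quot_comm: "comm_group (BG n g Mod N2)"
proof -
  interpret N: normal N2 "BG n g" by (rule N2_normal)
  interpret Q: group "BG n g Mod N2" by (rule N.factorgroup_is_group)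
  show ?thesis
  proof (rule Q.group_comm_groupI)
    fix UU VV assume "UU \<in> carrier (BG n g Mod N2)" "VV \<in> carrier (BG n g Mod N2)"
    then obtain x y where xy: "x \<in> carrier (BG n g)" "y \<in> carrier (BG n g)" "UU = N2 #>\<^bsub>BG n g\<^esub> x" "VV = N2 #>\<^bsub>BG n g\<^esub> y"
      by (auto simp: carrier_FactGroup)
    obtain k where k: "K.tw (s [^] (k::int)) (f x) (f y)" using Comm[OF xy(1,2)] by blast
    have c: "f x \<in> carrier K" "f y \<in> carrier K" using fK xy by auto
    have "f ((x \<otimes>\<^bsub>BG n g\<^esub> y) \<otimes>\<^bsub>BG n g\<^esub> inv\<^bsub>BG n g\<^esub> (y \<otimes>\<^bsub>BG n g\<^esub> x)) = (f x \<otimes> f y) \<otimes> inv (f y \<otimes> f x)"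
      using xy by (simp add: fh.hom_inv)
    also have "\<dots> = (s [^] k \<otimes> f y \<otimes> f x) \<otimes> inv (f y \<otimes> f x)" using k by (simp add: K.tw_def)
    also have "\<dots> = s [^] k" using c spow_carr by (simp add: K.m_assoc)
    finally have e: "f ((x \<otimes>\<^bsub>BG n g\<^esub> y) \<otimes>\<^bsub>BG n g\<^esub> inv\<^bsub>BG n g\<^esub> (y \<otimes>\<^bsub>BG n g\<^esub> x)) = s [^] k" .
    have "(x \<otimes>\<^bsub>BG n g\<^esub> y) \<otimes>\<^bsub>BG n g\<^esub> inv\<^bsub>BG n g\<^esub> (y \<otimes>\<^bsub>BG n g\<^esub> x) \<in> carrier (BG n g)"
      using xy by simp
    then have "(x \<otimes>\<^bsub>BG n g\<^esub> y) \<otimes>\<^bsub>BG n g\<^esub> inv\<^bsub>BG n g\<^esub> (y \<otimes>\<^bsub>BG n g\<^esub> x) \<in> N2"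
      unfolding N2_def using e by blast
    then have "x \<otimes>\<^bsub>BG n g\<^esub> y \<in> N2 #>\<^bsub>BG n g\<^esub> (y \<otimes>\<^bsub>BG n g\<^esub> x)"
      using N.rcos_module[OF B.is_group] xy by auto
    then have "N2 #>\<^bsub>BG n g\<^esub> (y \<otimes>\<^bsub>BG n g\<^esub> x) = N2 #>\<^bsub>BG n g\<^esub> (x \<otimes>\<^bsub>BG n g\<^esub> y)"
      using B.repr_independence[OF _ _ N2_subgroup] xy by auto
    then show "UU \<otimes>\<^bsub>BG n g Mod N2\<^esub> VV = VV \<otimes>\<^bsub>BG n g Mod N2\<^esub> UU"
      using xy by (simp add: N.rcos_sum)
  qed
qed

end


declare mult_FactGroup [simp del] one_FactGroup [simp del]

context tgt
begin

lemma Q5: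
  assumes y: "y \<in> carrier (BG n g)"
    and z: "\<And>i. 1 \<le> i \<Longrightarrow> i \<le> g \<Longrightarrow> alpha n g i y = 0 \<and> beta n g i y = 0"
  shows "y \<in> N2"
proof -
  interpret N: normal N2 "BG n g" by (rule N2_normal)
  interpret A: comm_group "BG n g Mod N2" by (rule N2_quot_comm)
  let ?Q = "BG n g Mod N2"
  define ca where "ca i = N2 #>\<^bsub>BG n g\<^esub> aa n g i" for i
  define cb where "cb i = N2 #>\<^bsub>BG n g\<^esub> bb n g i" for i
  define P where "P y = finprod ?Q (\<lambda>i. ca i [^]\<^bsub>?Q\<^esub> alpha n g i y \<otimes>\<^bsub>?Q\<^esub> cb i [^]\<^bsub>?Q\<^esub> beta n g i y) {1..g}" for y
  have cac: "ca i \<in> carrier ?Q" "cb i \<in> carrier ?Q" if "i \<in> {1..g}" for i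
    using that B_gen_carrier[of "Ag i" n g] B_gen_carrier[of "Bg i" n g]
    by (auto simp: ca_def cb_def carrier_FactGroup)
  have tc: "(\<lambda>i. ca i [^]\<^bsub>?Q\<^esub> (a::int) \<otimes>\<^bsub>?Q\<^esub> cb i [^]\<^bsub>?Q\<^esub> (b::int)) \<in> {1..g} \<rightarrow> carrier ?Q" for a b
    using cac by (intro Pi_I A.m_closed A.int_pow_closed) auto
  have tc2: "(\<lambda>i. ca i [^]\<^bsub>?Q\<^esub> alpha n g i u \<otimes>\<^bsub>?Q\<^esub> cb i [^]\<^bsub>?Q\<^esub> beta n g i u) \<in> {1..g} \<rightarrow> carrier ?Q" for u
    using cac by (intro Pi_I A.m_closed A.int_pow_closed) auto
  interpret Ah: group_hom "BG n g" integer_group "alpha n g i" for i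
    by (simp add: group_hom_def group_hom_axioms_def B.is_group alpha_hom)
  interpret Bh: group_hom "BG n g" integer_group "beta n g i" for i
    by (simp add: group_hom_def group_hom_axioms_def B.is_group beta_hom)
  have Phom: "P \<in> hom (BG n g) ?Q"
  proof (rule homI)
    fix u assume "u \<in> carrier (BG n g)"
    show "P u \<in> carrier ?Q" unfolding P_def by (rule A.finprod_closed[OF tc2])
  next
    fix u v assume uv: "u \<in> carrier (BG n g)" "v \<in> carrier (BG n g)"
    have "ca i [^]\<^bsub>?Q\<^esub> alpha n g i (u \<otimes>\<^bsub>BG n g\<^esub> v) \<otimes>\<^bsub>?Q\<^esub> cb i [^]\<^bsub>?Q\<^esub> beta n g i (u \<otimes>\<^bsub>BG n g\<^esub> v) =
          (ca i [^]\<^bsub>?Q\<^esub> alpha n g i u \<otimes>\<^bsub>?Q\<^esub> cb i [^]\<^bsub>?Q\<^esub> beta n g i u) \<otimes>\<^bsub>?Q\<^esub>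
          (ca i [^]\<^bsub>?Q\<^esub> alpha n g i v \<otimes>\<^bsub>?Q\<^esub> cb i [^]\<^bsub>?Q\<^esub> beta n g i v)"
      if i: "i \<in> {1..g}" for i
    proof -
      have "alpha n g i (u \<otimes>\<^bsub>BG n g\<^esub> v) = alpha n g i u + alpha n g i v"
        "beta n g i (u \<otimes>\<^bsub>BG n g\<^esub> v) = beta n g i u + beta n g i v"
        using uv Ah.hom_mult Bh.hom_mult by auto
      then show ?thesis using cac[OF i] by (simp add: A.int_pow_mult A.m_ac del: mult_FactGroup)
    qed
    note eqf = this
    have pc: "(\<lambda>i. (ca i [^]\<^bsub>?Q\<^esub> alpha n g i u \<otimes>\<^bsub>?Q\<^esub> cb i [^]\<^bsub>?Q\<^esub> beta n g i u) \<otimes>\<^bsub>?Q\<^esub>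
          (ca i [^]\<^bsub>?Q\<^esub> alpha n g i v \<otimes>\<^bsub>?Q\<^esub> cb i [^]\<^bsub>?Q\<^esub> beta n g i v)) \<in> {1..g} \<rightarrow> carrier ?Q"
      using cac by (intro Pi_I A.m_closed A.int_pow_closed) auto
    have "P (u \<otimes>\<^bsub>BG n g\<^esub> v) = finprod ?Q (\<lambda>i. (ca i [^]\<^bsub>?Q\<^esub> alpha n g i u \<otimes>\<^bsub>?Q\<^esub> cb i [^]\<^bsub>?Q\<^esub> beta n g i u) \<otimes>\<^bsub>?Q\<^esub>
          (ca i [^]\<^bsub>?Q\<^esub> alpha n g i v \<otimes>\<^bsub>?Q\<^esub> cb i [^]\<^bsub>?Q\<^esub> beta n g i v)) {1..g}"
      unfolding P_def by (rule A.finprod_cong'[OF HOL.refl pc eqf])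
    also have "\<dots> = P u \<otimes>\<^bsub>?Q\<^esub> P v" unfolding P_def by (rule A.finprod_multf[OF tc2 tc2])
    finally show "P (u \<otimes>\<^bsub>BG n g\<^esub> v) = P u \<otimes>\<^bsub>?Q\<^esub> P v" .
  qed
  have pihom: "(\<lambda>u. N2 #>\<^bsub>BG n g\<^esub> u) \<in> hom (BG n g) ?Q" by (rule N.r_coset_hom_Mod)
  have agree: "N2 #>\<^bsub>BG n g\<^esub> u = P u" if u: "u \<in> bgen_elem n g ` braid_gens n g" for u
  proof -
    obtain x where x: "x \<in> braid_gens n g" "u = bgen_elem n g x" using u by auto
    show ?thesis
    proof (cases x)
      case (Sig j)
      have xj: "1 \<le> j" "j \<le> n - 1" using x Sig by auto
      have fu: "f u = s [^] (1::int)" using fsig[OF xj] s_carr x(2) Sig by simp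
      have uc: "u \<in> carrier (BG n g)" using x B_gen_carrier by blast
      have "u \<in> N2" unfolding N2_def using fu uc by blast
      then have l: "N2 #>\<^bsub>BG n g\<^esub> u = N2" by (rule B.coset_join2[OF uc N2_subgroup])
      have ab0: "alpha n g i u = 0" "beta n g i u = 0" for i
        using alpha_gen[OF x(1), of i] beta_gen[OF x(1), of i] x(2) Sig by auto
      have "P u = finprod ?Q (\<lambda>i. \<one>\<^bsub>?Q\<^esub>) {1..g}"
        unfolding P_def ab0 by (rule A.finprod_cong'[OF HOL.refl]) (use cac in auto)
      also have "\<dots> = \<one>\<^bsub>?Q\<^esub>" by (rule A.finprod_one)
      finally show ?thesis using l by (simp add: one_FactGroup)
    next
      case (Ag j)
      have j: "j \<in> {1..g}" using x Ag by auto
      have ab: "alpha n g i u = (if j = i then 1 else 0)" "beta n g i u = 0" for i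
        using alpha_gen[OF x(1), of i] beta_gen[OF x(1), of i] x(2) Ag by auto
      have "P u = finprod ?Q (\<lambda>i. if j = i then ca i else \<one>\<^bsub>?Q\<^esub>) {1..g}"
        unfolding P_def ab by (rule A.finprod_cong'[OF HOL.refl]) (use cac in auto)
      also have "\<dots> = ca j" by (rule A.finprod_singleton[OF j]) (use cac in auto)
      finally show ?thesis using x Ag by (simp add: ca_def)
    next
      case (Bg j)
      have j: "j \<in> {1..g}" using x Bg by auto
      have ab: "beta n g i u = (if j = i then 1 else 0)" "alpha n g i u = 0" for i
        using alpha_gen[OF x(1), of i] beta_gen[OF x(1), of i] x(2) Bg by auto
      have "P u = finprod ?Q (\<lambda>i. if j = i then cb i else \<one>\<^bsub>?Q\<^esub>) {1..g}"
        unfolding P_def ab by (rule A.finprod_cong'[OF HOL.refl]) (use cac in auto)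
      also have "\<dots> = cb j" by (rule A.finprod_singleton[OF j]) (use cac in auto)
      finally show ?thesis using x Bg by (simp add: cb_def)
    qed
  qed
  have "N2 #>\<^bsub>BG n g\<^esub> y = P y"
    using B.hom_eq_on_generate[OF pihom Phom A.is_group B_gens_sub agree] y B_generated by auto
  also have "P y = finprod ?Q (\<lambda>i. \<one>\<^bsub>?Q\<^esub>) {1..g}"
    unfolding P_def using z cac by (intro A.finprod_cong') auto
  also have "\<dots> = \<one>\<^bsub>?Q\<^esub>" by (rule A.finprod_one)
  finally have "N2 #>\<^bsub>BG n g\<^esub> y = N2" by (simp add: one_FactGroup)
  then show ?thesis using B.rcos_self[OF y N2_subgroup] by simp
qed

end


lemma (in group) inv_cancel_left: "x \<in> carrier G \<Longrightarrow> y \<in> carrier G \<Longrightarrow> inv x \<otimes> (x \<otimes> y) = y"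
  by (simp add: m_assoc[symmetric])
lemma (in group) cancel_inv_left: "x \<in> carrier G \<Longrightarrow> y \<in> carrier G \<Longrightarrow> x \<otimes> (inv x \<otimes> y) = y"
  by (simp add: m_assoc[symmetric])

lemma LC2: "lower_central G 2 = comm_subgroup G (carrier G) (carrier G)"
  by (simp add: numeral_2_eq_2)

lemma LC3: "lower_central G 3 = comm_subgroup G (carrier G) (lower_central G 2)"
  by (simp add: numeral_3_eq_3 numeral_2_eq_2)

lemma (in group) LC2_derived: "lower_central G 2 = derived G (carrier G)"
  unfolding LC2 comm_subgroup_def derived_def
  by (rule arg_cong[where f="generate G"]) blast

lemma (in group) comm_conj:
  assumes "x \<in> carrier G" "y \<in> carrier G" "h \<in> carrier G"
  shows "h \<otimes> (x \<otimes> y \<otimes> inv x \<otimes> inv y) \<otimes> inv h =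
         (h \<otimes> x \<otimes> inv h) \<otimes> (h \<otimes> y \<otimes> inv h) \<otimes> inv (h \<otimes> x \<otimes> inv h) \<otimes> inv (h \<otimes> y \<otimes> inv h)"
  using assms by (simp add: m_assoc inv_mult_group inv_cancel_left)

lemma (in group) LC2_normal: "lower_central G 2 \<lhd> G"
  using LC2_derived derived_self_is_normal by simp

lemma (in group) LC2_sub: "lower_central G 2 \<subseteq> carrier G"
  using LC2_normal normal_imp_subgroup subgroup.subset by blast

lemma (in group) LC3_gen_sub:
  "{x \<otimes> y \<otimes> inv x \<otimes> inv y | x y. x \<in> carrier G \<and> y \<in> lower_central G 2} \<subseteq> carrier G"
  using LC2_sub by auto

lemma (in group) LC3_normal: "lower_central G 3 \<lhd> G"
  unfolding LC3 comm_subgroup_def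
proof (rule normal_generateI)
  show "{x \<otimes> y \<otimes> inv x \<otimes> inv y | x y. x \<in> carrier G \<and> y \<in> lower_central G 2} \<subseteq> carrier G"
    by (rule LC3_gen_sub)
next
  interpret N: normal "lower_central G 2" G by (rule LC2_normal)
  fix h k assume "h \<in> {x \<otimes> y \<otimes> inv x \<otimes> inv y | x y. x \<in> carrier G \<and> y \<in> lower_central G 2}" and k: "k \<in> carrier G"
  then obtain x y where xy: "x \<in> carrier G" "y \<in> lower_central G 2" "h = x \<otimes> y \<otimes> inv x \<otimes> inv y" by blast
  have yc: "y \<in> carrier G" using xy LC2_sub by auto
  have "k \<otimes> h \<otimes> inv k = (k \<otimes> x \<otimes> inv k) \<otimes> (k \<otimes> y \<otimes> inv k) \<otimes> inv (k \<otimes> x \<otimes> inv k) \<otimes> inv (k \<otimes> y \<otimes> inv k)"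
    using comm_conj[OF xy(1) yc k] xy(3) by simp
  moreover have "k \<otimes> y \<otimes> inv k \<in> lower_central G 2" using N.inv_op_closed2[OF k xy(2)] .
  moreover have "k \<otimes> x \<otimes> inv k \<in> carrier G" using xy k by simp
  ultimately show "k \<otimes> h \<otimes> inv k \<in> {x \<otimes> y \<otimes> inv x \<otimes> inv y | x y. x \<in> carrier G \<and> y \<in> lower_central G 2}"
    by blast
qed

lemma (in group) braid_central:
  assumes p: "p \<in> carrier G" and q: "q \<in> carrier G" and r: "p \<otimes> q \<otimes> p = q \<otimes> p \<otimes> q"
    and zc: "(q \<otimes> p \<otimes> inv q \<otimes> inv p) \<otimes> p = p \<otimes> (q \<otimes> p \<otimes> inv q \<otimes> inv p)"
  shows "p = q"
proof -
  define z where "z = q \<otimes> p \<otimes> inv q \<otimes> inv p"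
  have z: "z \<in> carrier G" using p q by (simp add: z_def)
  have zp: "z \<otimes> p = p \<otimes> z" using zc by (simp add: z_def)
  have "inv p \<otimes> q \<otimes> (p \<otimes> q) = inv p \<otimes> (q \<otimes> p \<otimes> q)" using p q by (simp add: m_assoc)
  also have "\<dots> = inv p \<otimes> (p \<otimes> q \<otimes> p)" by (simp only: r)
  also have "\<dots> = q \<otimes> p" using p q by (simp add: m_assoc[symmetric])
  also have "\<dots> = z \<otimes> (p \<otimes> q)" using p q by (simp add: z_def m_assoc inv_cancel_left)
  finally have "inv p \<otimes> q = z" using p q z by (simp add: r_cancel)
  then have qz: "q = p \<otimes> z" using p q z by (metis inv_solve_left)
  have "p \<otimes> p \<otimes> p \<otimes> z = p \<otimes> p \<otimes> (z \<otimes> p)" using p z by (simp add: zp m_assoc)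
  also have "\<dots> = p \<otimes> (p \<otimes> z) \<otimes> p" using p z by (simp add: m_assoc)
  also have "\<dots> = p \<otimes> q \<otimes> p" by (simp only: qz)
  also have "\<dots> = q \<otimes> p \<otimes> q" by (rule r)
  also have "\<dots> = p \<otimes> (z \<otimes> p) \<otimes> (p \<otimes> z)" using p z by (simp add: qz m_assoc)
  also have "\<dots> = p \<otimes> (p \<otimes> z) \<otimes> (p \<otimes> z)" by (simp only: zp)
  also have "\<dots> = p \<otimes> p \<otimes> (z \<otimes> p) \<otimes> z" using p z by (simp add: m_assoc)
  also have "\<dots> = p \<otimes> p \<otimes> (p \<otimes> z) \<otimes> z" by (simp only: zp)
  also have "\<dots> = (p \<otimes> p \<otimes> p \<otimes> z) \<otimes> z" using p z by (simp add: m_assoc)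
  finally have e: "(p \<otimes> p \<otimes> p \<otimes> z) \<otimes> \<one> = (p \<otimes> p \<otimes> p \<otimes> z) \<otimes> z" using p z by simp
  have "z = \<one>" using l_cancel[OF e] p z by simp
  then show ?thesis using qz p by simp
qed

lemma (in group) comm_from_commutator:
  assumes "a \<in> carrier G" "b \<in> carrier G" "a \<otimes> b \<otimes> inv a \<otimes> inv b = \<one>"
  shows "a \<otimes> b = b \<otimes> a"
proof -
  have "a \<otimes> b = (a \<otimes> b \<otimes> inv a \<otimes> inv b) \<otimes> (b \<otimes> a)"
    using assms(1,2) by (simp add: m_assoc inv_cancel_left)
  then show ?thesis using assms by simp
qed

context tgt
begin

lemma comm_N2:
  assumes x: "x \<in> carrier (BG n g)" and y: "y \<in> carrier (BG n g)"
  shows "x \<otimes>\<^bsub>BG n g\<^esub> y \<otimes>\<^bsub>BG n g\<^esub> inv\<^bsub>BG n g\<^esub> x \<otimes>\<^bsub>BG n g\<^esub> inv\<^bsub>BG n g\<^esub> y \<in> N2"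
proof -
  obtain k where k: "K.tw (s [^] (k::int)) (f x) (f y)" using Comm[OF x y] by blast
  have c: "f x \<in> carrier K" "f y \<in> carrier K" using fK x y by auto
  have "f (x \<otimes>\<^bsub>BG n g\<^esub> y \<otimes>\<^bsub>BG n g\<^esub> inv\<^bsub>BG n g\<^esub> x \<otimes>\<^bsub>BG n g\<^esub> inv\<^bsub>BG n g\<^esub> y) =
        (f x \<otimes> f y) \<otimes> inv (f y \<otimes> f x)"
    using x y c by (simp add: fh.hom_inv K.m_assoc K.inv_mult_group)
  also have "\<dots> = (s [^] k \<otimes> f y \<otimes> f x) \<otimes> inv (f y \<otimes> f x)" using k by (simp add: K.tw_def)
  also have "\<dots> = s [^] k" using c spow_carr by (simp add: K.m_assoc)
  finally have e: "f (x \<otimes>\<^bsub>BG n g\<^esub> y \<otimes>\<^bsub>BG n g\<^esub> inv\<^bsub>BG n g\<^esub> x \<otimes>\<^bsub>BG n g\<^esub> inv\<^bsub>BG n g\<^esub> y) = s [^] k" .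
  have "x \<otimes>\<^bsub>BG n g\<^esub> y \<otimes>\<^bsub>BG n g\<^esub> inv\<^bsub>BG n g\<^esub> x \<otimes>\<^bsub>BG n g\<^esub> inv\<^bsub>BG n g\<^esub> y \<in> carrier (BG n g)"
    using x y by simp
  then show ?thesis unfolding N2_def using e by blast
qed

lemma comm_N2_triv:
  assumes x: "x \<in> carrier (BG n g)" and y: "y \<in> N2"
  shows "f (x \<otimes>\<^bsub>BG n g\<^esub> y \<otimes>\<^bsub>BG n g\<^esub> inv\<^bsub>BG n g\<^esub> x \<otimes>\<^bsub>BG n g\<^esub> inv\<^bsub>BG n g\<^esub> y) = \<one>"
proof -
  obtain k where yc: "y \<in> carrier (BG n g)" and k: "f y = s [^] (k::int)" using y by (auto simp: N2_def)
  have c: "f x \<in> carrier K" using fK x by auto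
  have "f (x \<otimes>\<^bsub>BG n g\<^esub> y \<otimes>\<^bsub>BG n g\<^esub> inv\<^bsub>BG n g\<^esub> x \<otimes>\<^bsub>BG n g\<^esub> inv\<^bsub>BG n g\<^esub> y) =
        f x \<otimes> s [^] k \<otimes> inv (f x) \<otimes> inv (s [^] k)"
    using x yc k by (simp add: fh.hom_inv)
  also have "\<dots> = s [^] k \<otimes> f x \<otimes> inv (f x) \<otimes> inv (s [^] k)"
    by (simp only: spow_central[OF x, symmetric])
  also have "\<dots> = \<one>" using c spow_carr by (simp add: K.m_assoc)
  finally show ?thesis .
qed

lemma Gamma2_N2: "lower_central (BG n g) 2 \<subseteq> N2"
  unfolding LC2 comm_subgroup_def
  by (rule B.generate_subgroup_incl[OF _ N2_subgroup]) (use comm_N2 in blast)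

lemma Gamma3_ker: "lower_central (BG n g) 3 \<subseteq> kernel (BG n g) K f"
  unfolding LC3 comm_subgroup_def
proof (rule B.generate_subgroup_incl[OF _ fh.subgroup_kernel])
  show "{x \<otimes>\<^bsub>BG n g\<^esub> y \<otimes>\<^bsub>BG n g\<^esub> inv\<^bsub>BG n g\<^esub> x \<otimes>\<^bsub>BG n g\<^esub> inv\<^bsub>BG n g\<^esub> y |x y.
          x \<in> carrier (BG n g) \<and> y \<in> lower_central (BG n g) 2} \<subseteq> kernel (BG n g) K f"
  proof
    fix z assume "z \<in> {x \<otimes>\<^bsub>BG n g\<^esub> y \<otimes>\<^bsub>BG n g\<^esub> inv\<^bsub>BG n g\<^esub> x \<otimes>\<^bsub>BG n g\<^esub> inv\<^bsub>BG n g\<^esub> y |x y.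
          x \<in> carrier (BG n g) \<and> y \<in> lower_central (BG n g) 2}"
    then obtain x y where xy: "x \<in> carrier (BG n g)" "y \<in> lower_central (BG n g) 2"
      "z = x \<otimes>\<^bsub>BG n g\<^esub> y \<otimes>\<^bsub>BG n g\<^esub> inv\<^bsub>BG n g\<^esub> x \<otimes>\<^bsub>BG n g\<^esub> inv\<^bsub>BG n g\<^esub> y" by blast
    have yN: "y \<in> N2" using xy Gamma2_N2 by auto
    then have yc: "y \<in> carrier (BG n g)" by (auto simp: N2_def)
    show "z \<in> kernel (BG n g) K f"
      using comm_N2_triv[OF xy(1) yN] xy yc by (simp add: kernel_def)
  qed
qed

end


lemma sgm_carr: "1 \<le> i \<Longrightarrow> i \<le> n - 1 \<Longrightarrow> sgm n g i \<in> carrier (BG n g)"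
  by (rule B_gen_carrier) simp

lemma sgm_iota: "1 \<le> i \<Longrightarrow> i \<le> n - 1 \<Longrightarrow> sgm n g i \<in> iota_image n g"
  unfolding iota_image_def by (rule generate.incl) blast

lemma iota_sub: "iota_image n g \<subseteq> carrier (BG n g)"
  unfolding iota_image_def
  by (rule group.generate_incl[OF B_group]) (auto intro: sgm_carr)

lemma iota_mult: "a \<in> iota_image n g \<Longrightarrow> b \<in> iota_image n g \<Longrightarrow> a \<otimes>\<^bsub>BG n g\<^esub> b \<in> iota_image n g"
  unfolding iota_image_def by (rule generate.eng)

lemma sig_equal_H:
  assumes n3: "n \<ge> 3" and H: "group H" and lam: "lam \<in> hom (BG n g) H"
    and phi: "\<phi> \<in> iso (H\<lparr>carrier := lam ` iota_image n g\<rparr>) integer_group"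
    and i: "1 \<le> i" "i \<le> n - 1"
  shows "lam (sgm n g i) = lam (sgm n g 1)"
  using i
proof (induction i rule: dec_induct)
  case base
  then show ?case by simp
next
  case (step m)
  interpret B: group "BG n g" by (rule B_group)
  interpret Hg: group H by (rule H)
  have m: "1 \<le> m" "m \<le> n - 2" using step by auto
  let ?p = "lam (sgm n g m)" and ?q = "lam (sgm n g (m+1))"
  have cm: "sgm n g m \<in> carrier (BG n g)" "sgm n g (m+1) \<in> carrier (BG n g)"
    using m by (auto intro!: sgm_carr)
  have io: "sgm n g m \<in> iota_image n g" "sgm n g (m+1) \<in> iota_image n g"
    using m by (auto intro!: sgm_iota)
  have pq: "?p \<in> carrier H" "?q \<in> carrier H" using cm lam by (auto simp: hom_def)
  have inL: "?p \<otimes>\<^bsub>H\<^esub> ?q \<in> lam ` iota_image n g" "?q \<otimes>\<^bsub>H\<^esub> ?p \<in> lam ` iota_image n g"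
    "?p \<in> lam ` iota_image n g" "?q \<in> lam ` iota_image n g"
  proof -
    have "lam (sgm n g m \<otimes>\<^bsub>BG n g\<^esub> sgm n g (m+1)) = ?p \<otimes>\<^bsub>H\<^esub> ?q"
         "lam (sgm n g (m+1) \<otimes>\<^bsub>BG n g\<^esub> sgm n g m) = ?q \<otimes>\<^bsub>H\<^esub> ?p"
      using cm lam by (auto simp: hom_def)
    then show "?p \<otimes>\<^bsub>H\<^esub> ?q \<in> lam ` iota_image n g" "?q \<otimes>\<^bsub>H\<^esub> ?p \<in> lam ` iota_image n g"
      using io iota_mult by (metis imageI)+
    show "?p \<in> lam ` iota_image n g" "?q \<in> lam ` iota_image n g" using io by auto
  qed
  have phom: "\<phi> (x \<otimes>\<^bsub>H\<^esub> y) = \<phi> x + \<phi> y" if "x \<in> lam ` iota_image n g" "y \<in> lam ` iota_image n g" for x y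
    using phi that unfolding iso_def hom_def by auto
  have inj: "inj_on \<phi> (lam ` iota_image n g)" using phi unfolding iso_def bij_betw_def by auto
  have "\<phi> (?p \<otimes>\<^bsub>H\<^esub> ?q) = \<phi> (?q \<otimes>\<^bsub>H\<^esub> ?p)" using phom inL by (simp add: add.commute)
  then have comm: "?p \<otimes>\<^bsub>H\<^esub> ?q = ?q \<otimes>\<^bsub>H\<^esub> ?p" using inj inL by (auto dest: inj_onD)
  have "lam (sgm n g m \<otimes>\<^bsub>BG n g\<^esub> sgm n g (m+1) \<otimes>\<^bsub>BG n g\<^esub> sgm n g m) =
        lam (sgm n g (m+1) \<otimes>\<^bsub>BG n g\<^esub> sgm n g m \<otimes>\<^bsub>BG n g\<^esub> sgm n g (m+1))"
    using B_braid[OF m] by simp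
  then have r: "?p \<otimes>\<^bsub>H\<^esub> ?q \<otimes>\<^bsub>H\<^esub> ?p = ?q \<otimes>\<^bsub>H\<^esub> ?p \<otimes>\<^bsub>H\<^esub> ?q"
    using cm lam by (simp add: hom_mult)
  have z1: "?q \<otimes>\<^bsub>H\<^esub> ?p \<otimes>\<^bsub>H\<^esub> inv\<^bsub>H\<^esub> ?q \<otimes>\<^bsub>H\<^esub> inv\<^bsub>H\<^esub> ?p = \<one>\<^bsub>H\<^esub>"
  proof -
    have "?q \<otimes>\<^bsub>H\<^esub> ?p \<otimes>\<^bsub>H\<^esub> inv\<^bsub>H\<^esub> ?q \<otimes>\<^bsub>H\<^esub> inv\<^bsub>H\<^esub> ?p = ?p \<otimes>\<^bsub>H\<^esub> ?q \<otimes>\<^bsub>H\<^esub> inv\<^bsub>H\<^esub> ?q \<otimes>\<^bsub>H\<^esub> inv\<^bsub>H\<^esub> ?p"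
      by (simp only: comm)
    also have "\<dots> = \<one>\<^bsub>H\<^esub>" using pq by (simp add: Hg.m_assoc Hg.cancel_inv_left)
    finally show ?thesis .
  qed
  have "?p = ?q"
    by (rule Hg.braid_central[OF pq r]) (use pq z1 in simp)
  then show ?case using step by simp
qed

lemma iota_image_lam:
  assumes n3: "n \<ge> 3" and H: "group H" and lam: "lam \<in> hom (BG n g) H"
    and sig: "\<And>i. 1 \<le> i \<Longrightarrow> i \<le> n - 1 \<Longrightarrow> lam (sgm n g i) = s"
  shows "lam ` iota_image n g = {s [^]\<^bsub>H\<^esub> (k::int) | k. k \<in> UNIV}"
proof -
  interpret lh: group_hom "BG n g" H lam
    by (simp add: group_hom_def group_hom_axioms_def B_group H lam)
  have sub: "{sgm n g i | i. 1 \<le> i \<and> i \<le> n - 1} \<subseteq> carrier (BG n g)" using sgm_carr by blast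
  have im: "lam ` {sgm n g i | i. 1 \<le> i \<and> i \<le> n - 1} = {s}"
  proof
    show "lam ` {sgm n g i | i. 1 \<le> i \<and> i \<le> n - 1} \<subseteq> {s}" using sig by auto
    have "lam (sgm n g 1) = s" using sig n3 by auto
    moreover have "sgm n g 1 \<in> {sgm n g i | i. 1 \<le> i \<and> i \<le> n - 1}" using n3 by auto
    ultimately show "{s} \<subseteq> lam ` {sgm n g i | i. 1 \<le> i \<and> i \<le> n - 1}" by blast
  qed
  have s1: "lam (sgm n g 1) = s" using sig[of 1] n3 by auto
  have "sgm n g 1 \<in> carrier (BG n g)" using sgm_carr[of 1 n g] n3 by auto
  then have sc: "s \<in> carrier H" using s1 lh.hom_closed by metis
  show ?thesis
    unfolding iota_image_def lh.generate_img[OF sub, symmetric] im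
    by (rule lh.H.generate_pow[OF sc])
qed

lemma infinite_order:
  assumes H: "group H" and sc: "s \<in> carrier H"
    and L: "L = {s [^]\<^bsub>H\<^esub> (k::int) | k. k \<in> UNIV}"
    and phi: "\<phi> \<in> iso (H\<lparr>carrier := L\<rparr>) integer_group"
    and m: "s [^]\<^bsub>H\<^esub> (m::int) = \<one>\<^bsub>H\<^esub>"
  shows "m = 0"
proof (rule ccontr)
  assume m0: "m \<noteq> 0"
  interpret Hg: group H by (rule H)
  define M where "M = \<bar>m\<bar>"
  have M0: "M > 0" using m0 by (simp add: M_def)
  have sM: "s [^]\<^bsub>H\<^esub> M = \<one>\<^bsub>H\<^esub>"
  proof (cases "m \<ge> 0")
    case True then show ?thesis using m by (simp add: M_def)
  next
    case False
    then have "M = - m" by (simp add: M_def)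
    then show ?thesis using m sc by (simp add: Hg.int_pow_neg)
  qed
  have red: "s [^]\<^bsub>H\<^esub> k = s [^]\<^bsub>H\<^esub> (k mod M)" for k :: int
  proof -
    have "s [^]\<^bsub>H\<^esub> k = s [^]\<^bsub>H\<^esub> (M * (k div M) + k mod M)" by simp
    also have "\<dots> = s [^]\<^bsub>H\<^esub> (M * (k div M)) \<otimes>\<^bsub>H\<^esub> s [^]\<^bsub>H\<^esub> (k mod M)"
      by (rule Hg.int_pow_mult[OF sc])
    also have "s [^]\<^bsub>H\<^esub> (M * (k div M)) = \<one>\<^bsub>H\<^esub>"
      using Hg.int_pow_pow[OF sc, of M "k div M"] sM by simp
    finally show ?thesis using sc by simp
  qed
  have "L \<subseteq> (\<lambda>j. s [^]\<^bsub>H\<^esub> j) ` {0..<M}"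
  proof
    fix x assume "x \<in> L"
    then obtain k where "x = s [^]\<^bsub>H\<^esub> (k::int)" using L by auto
    then have "x = s [^]\<^bsub>H\<^esub> (k mod M)" using red by simp
    moreover have "k mod M \<in> {0..<M}" using M0 by simp
    ultimately show "x \<in> (\<lambda>j. s [^]\<^bsub>H\<^esub> j) ` {0..<M}" by blast
  qed
  then have "finite L" by (rule finite_subset) simp
  moreover have "bij_betw \<phi> L (UNIV :: int set)" using phi unfolding iso_def by auto
  ultimately have "finite (UNIV :: int set)" using bij_betw_finite by blast
  then show False by simp
qed

lemma Q_central:
  assumes w: "w \<in> carrier (BG n g)" and c: "c \<in> lower_central (BG n g) 2"
  shows "(lower_central (BG n g) 3 #>\<^bsub>BG n g\<^esub> w) \<otimes>\<^bsub>BG n g Mod lower_central (BG n g) 3\<^esub> (lower_central (BG n g) 3 #>\<^bsub>BG n g\<^esub> c) =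
         (lower_central (BG n g) 3 #>\<^bsub>BG n g\<^esub> c) \<otimes>\<^bsub>BG n g Mod lower_central (BG n g) 3\<^esub> (lower_central (BG n g) 3 #>\<^bsub>BG n g\<^esub> w)"
proof -
  interpret B: group "BG n g" by (rule B_group)
  let ?G3 = "lower_central (BG n g) 3"
  let ?Q = "BG n g Mod ?G3"
  interpret N: normal ?G3 "BG n g" by (rule B.LC3_normal)
  interpret Q: group ?Q by (rule N.factorgroup_is_group)
  interpret ph: group_hom "BG n g" ?Q "\<lambda>x. ?G3 #>\<^bsub>BG n g\<^esub> x"
    by (simp add: group_hom_def group_hom_axioms_def B.is_group Q.is_group N.r_coset_hom_Mod)
  have cc: "c \<in> carrier (BG n g)" using c B.LC2_sub by auto
  let ?k = "w \<otimes>\<^bsub>BG n g\<^esub> c \<otimes>\<^bsub>BG n g\<^esub> inv\<^bsub>BG n g\<^esub> w \<otimes>\<^bsub>BG n g\<^esub> inv\<^bsub>BG n g\<^esub> c"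
  have "?k \<in> ?G3" unfolding LC3 comm_subgroup_def by (rule generate.incl) (use w c in blast)
  then have "?G3 #>\<^bsub>BG n g\<^esub> ?k = \<one>\<^bsub>?Q\<^esub>"
    using B.coset_join2[OF _ N.subgroup_axioms] by (simp add: one_FactGroup)
  then have "(?G3 #>\<^bsub>BG n g\<^esub> w) \<otimes>\<^bsub>?Q\<^esub> (?G3 #>\<^bsub>BG n g\<^esub> c) \<otimes>\<^bsub>?Q\<^esub> inv\<^bsub>?Q\<^esub> (?G3 #>\<^bsub>BG n g\<^esub> w)
            \<otimes>\<^bsub>?Q\<^esub> inv\<^bsub>?Q\<^esub> (?G3 #>\<^bsub>BG n g\<^esub> c) = \<one>\<^bsub>?Q\<^esub>"
    using w cc by (simp add: ph.hom_inv del: mult_FactGroup one_FactGroup)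
  then show ?thesis by (rule Q.comm_from_commutator[rotated 2]) (use w cc in auto)
qed

lemma Q_sig:
  assumes n3: "n \<ge> 3" and i: "1 \<le> i" "i \<le> n - 1"
  shows "lower_central (BG n g) 3 #>\<^bsub>BG n g\<^esub> sgm n g i = lower_central (BG n g) 3 #>\<^bsub>BG n g\<^esub> sgm n g 1"
  using i
proof (induction i rule: dec_induct)
  case base
  then show ?case by simp
next
  case (step m)
  interpret B: group "BG n g" by (rule B_group)
  let ?G3 = "lower_central (BG n g) 3"
  let ?Q = "BG n g Mod ?G3"
  interpret N: normal ?G3 "BG n g" by (rule B.LC3_normal)
  interpret Q: group ?Q by (rule N.factorgroup_is_group)
  interpret ph: group_hom "BG n g" ?Q "\<lambda>x. ?G3 #>\<^bsub>BG n g\<^esub> x"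
    by (simp add: group_hom_def group_hom_axioms_def B.is_group Q.is_group N.r_coset_hom_Mod)
  have m: "1 \<le> m" "m \<le> n - 2" using step by auto
  let ?a = "sgm n g m" and ?b = "sgm n g (m+1)"
  have cm: "?a \<in> carrier (BG n g)" "?b \<in> carrier (BG n g)" using m by (auto intro!: sgm_carr)
  let ?p = "?G3 #>\<^bsub>BG n g\<^esub> ?a" and ?q = "?G3 #>\<^bsub>BG n g\<^esub> ?b"
  have pq: "?p \<in> carrier ?Q" "?q \<in> carrier ?Q" using cm by auto
  have "?G3 #>\<^bsub>BG n g\<^esub> (?a \<otimes>\<^bsub>BG n g\<^esub> ?b \<otimes>\<^bsub>BG n g\<^esub> ?a) =
        ?G3 #>\<^bsub>BG n g\<^esub> (?b \<otimes>\<^bsub>BG n g\<^esub> ?a \<otimes>\<^bsub>BG n g\<^esub> ?b)"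
    using B_braid[OF m] by simp
  then have r: "?p \<otimes>\<^bsub>?Q\<^esub> ?q \<otimes>\<^bsub>?Q\<^esub> ?p = ?q \<otimes>\<^bsub>?Q\<^esub> ?p \<otimes>\<^bsub>?Q\<^esub> ?q"
    using cm by (simp del: mult_FactGroup)
  let ?c = "?b \<otimes>\<^bsub>BG n g\<^esub> ?a \<otimes>\<^bsub>BG n g\<^esub> inv\<^bsub>BG n g\<^esub> ?b \<otimes>\<^bsub>BG n g\<^esub> inv\<^bsub>BG n g\<^esub> ?a"
  have c2: "?c \<in> lower_central (BG n g) 2" unfolding LC2 comm_subgroup_def
    by (rule generate.incl) (use cm in blast)
  have zc: "?G3 #>\<^bsub>BG n g\<^esub> ?c = ?q \<otimes>\<^bsub>?Q\<^esub> ?p \<otimes>\<^bsub>?Q\<^esub> inv\<^bsub>?Q\<^esub> ?q \<otimes>\<^bsub>?Q\<^esub> inv\<^bsub>?Q\<^esub> ?p"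
    using cm by (simp add: ph.hom_inv del: mult_FactGroup)
  have "?p = ?q"
  proof (rule Q.braid_central[OF pq r])
    show "?q \<otimes>\<^bsub>?Q\<^esub> ?p \<otimes>\<^bsub>?Q\<^esub> inv\<^bsub>?Q\<^esub> ?q \<otimes>\<^bsub>?Q\<^esub> inv\<^bsub>?Q\<^esub> ?p \<otimes>\<^bsub>?Q\<^esub> ?p =
          ?p \<otimes>\<^bsub>?Q\<^esub> (?q \<otimes>\<^bsub>?Q\<^esub> ?p \<otimes>\<^bsub>?Q\<^esub> inv\<^bsub>?Q\<^esub> ?q \<otimes>\<^bsub>?Q\<^esub> inv\<^bsub>?Q\<^esub> ?p)"
      using Q_central[OF cm(1) c2] unfolding zc[symmetric] by simp
  qed
  then show ?case using step by simp
qed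

lemma (in tgt) N2_memD: "y \<in> N2 \<Longrightarrow> \<exists>k::int. f y = s [^] k"
  by (auto simp: N2_def)

lemma kernel_eq:
  assumes g1: "g \<ge> 1" and n3: "n \<ge> 3" and H: "group H" and lam: "lam \<in> hom (BG n g) H"
    and iso: "H\<lparr>carrier := lam ` iota_image n g\<rparr> \<cong> integer_group"
  shows "kernel (BG n g) H lam = lower_central (BG n g) 3"
proof -
  interpret B: group "BG n g" by (rule B_group)
  let ?G3 = "lower_central (BG n g) 3"
  let ?Q = "BG n g Mod ?G3"
  interpret N: normal ?G3 "BG n g" by (rule B.LC3_normal)
  interpret Q: group ?Q by (rule N.factorgroup_is_group)
  obtain \<phi> where phi: "\<phi> \<in> iso (H\<lparr>carrier := lam ` iota_image n g\<rparr>) integer_group"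
    using iso by (auto simp: is_iso_def)
  define s where "s = lam (sgm n g 1)"
  have sig: "lam (sgm n g i) = s" if "1 \<le> i" "i \<le> n - 1" for i
    unfolding s_def by (rule sig_equal_H[OF n3 H lam phi that])
  interpret tH: tgt H n g lam s
    by (intro tgt.intro H tgt_axioms.intro) (use g1 n3 lam sig in auto)
  have L: "lam ` iota_image n g = {s [^]\<^bsub>H\<^esub> (k::int) | k. k \<in> UNIV}"
    by (rule iota_image_lam[OF n3 H lam sig])
  have inf: "k = 0" if "s [^]\<^bsub>H\<^esub> (k::int) = \<one>\<^bsub>H\<^esub>" for k
    by (rule infinite_order[OF H tH.s_carr L phi that])
  interpret tQ: tgt ?Q n g "\<lambda>x. ?G3 #>\<^bsub>BG n g\<^esub> x" "?G3 #>\<^bsub>BG n g\<^esub> sgm n g 1"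
  proof (intro tgt.intro Q.is_group tgt_axioms.intro)
    show "1 \<le> g" "3 \<le> n" using g1 n3 by auto
    show "(\<lambda>x. ?G3 #>\<^bsub>BG n g\<^esub> x) \<in> hom (BG n g) ?Q" by (rule N.r_coset_hom_Mod)
  next
    fix i assume i: "1 \<le> i" "i \<le> n - 1"
    show "?G3 #>\<^bsub>BG n g\<^esub> sgm n g i = ?G3 #>\<^bsub>BG n g\<^esub> sgm n g 1" by (rule Q_sig[OF n3 i])
  qed
  show ?thesis
  proof
    show "?G3 \<subseteq> kernel (BG n g) H lam" by (rule tH.Gamma3_ker)
  next
    show "kernel (BG n g) H lam \<subseteq> ?G3"
    proof
      fix x assume "x \<in> kernel (BG n g) H lam"
      then have x: "x \<in> carrier (BG n g)" and lx: "lam x = \<one>\<^bsub>H\<^esub>" by (auto simp: kernel_def)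
      have ab: "alpha n g i x = 0 \<and> beta n g i x = 0" if i: "1 \<le> i" "i \<le> g" for i
      proof
        have "tH.K.tw (s [^]\<^bsub>H\<^esub> (2 * alpha n g i x)) (lam x) (lam (bb n g i))" by (rule tH.twB[OF i x])
        then have "lam (bb n g i) = s [^]\<^bsub>H\<^esub> (2 * alpha n g i x) \<otimes>\<^bsub>H\<^esub> lam (bb n g i)"
          using lx tH.Bb_carr[OF i] tH.spow_carr by (simp add: tH.K.tw_def)
        then have "s [^]\<^bsub>H\<^esub> (2 * alpha n g i x) = \<one>\<^bsub>H\<^esub>"
          using tH.Bb_carr[OF i] tH.spow_carr by simp
        then show "alpha n g i x = 0" using inf by fastforce
      next
        have "tH.K.tw (s [^]\<^bsub>H\<^esub> (-2 * beta n g i x)) (lam x) (lam (aa n g i))" by (rule tH.twA[OF i x])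
        then have "lam (aa n g i) = s [^]\<^bsub>H\<^esub> (-2 * beta n g i x) \<otimes>\<^bsub>H\<^esub> lam (aa n g i)"
          using lx tH.A_carr[OF i] tH.spow_carr by (simp add: tH.K.tw_def)
        then have "s [^]\<^bsub>H\<^esub> (-2 * beta n g i x) = \<one>\<^bsub>H\<^esub>"
          using tH.A_carr[OF i] tH.spow_carr by simp
        then show "beta n g i x = 0" using inf by fastforce
      qed
      have "x \<in> tQ.N2" by (rule tQ.Q5[OF x ab])
      then obtain k where k: "?G3 #>\<^bsub>BG n g\<^esub> x = (?G3 #>\<^bsub>BG n g\<^esub> sgm n g 1) [^]\<^bsub>?Q\<^esub> (k::int)"
        using tQ.N2_memD by blast
      have s1: "sgm n g 1 \<in> carrier (BG n g)" using n3 by (auto intro!: sgm_carr)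
      have pk: "sgm n g 1 [^]\<^bsub>BG n g\<^esub> k \<in> carrier (BG n g)" using s1 by simp
      have "(?G3 #>\<^bsub>BG n g\<^esub> sgm n g 1) [^]\<^bsub>?Q\<^esub> k = ?G3 #>\<^bsub>BG n g\<^esub> (sgm n g 1 [^]\<^bsub>BG n g\<^esub> k)"
        using tQ.fh.hom_int_pow[OF s1] by simp
      with k have "?G3 #>\<^bsub>BG n g\<^esub> (sgm n g 1 [^]\<^bsub>BG n g\<^esub> k) = ?G3 #>\<^bsub>BG n g\<^esub> x" by simp
      then have "x \<in> ?G3 #>\<^bsub>BG n g\<^esub> (sgm n g 1 [^]\<^bsub>BG n g\<^esub> k)"
        using B.repr_independenceD[OF N.subgroup_axioms x] by simp
      then have "x \<otimes>\<^bsub>BG n g\<^esub> inv\<^bsub>BG n g\<^esub> (sgm n g 1 [^]\<^bsub>BG n g\<^esub> k) \<in> ?G3"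
        using N.rcos_module_imp[OF B.is_group pk] by simp
      then have "x \<otimes>\<^bsub>BG n g\<^esub> inv\<^bsub>BG n g\<^esub> (sgm n g 1 [^]\<^bsub>BG n g\<^esub> k) \<in> kernel (BG n g) H lam"
        using tH.Gamma3_ker by blast
      then have "lam x \<otimes>\<^bsub>H\<^esub> inv\<^bsub>H\<^esub> (s [^]\<^bsub>H\<^esub> k) = \<one>\<^bsub>H\<^esub>"
        using x s1 pk by (simp add: kernel_def tH.fh.hom_inv tH.fh.hom_int_pow s_def)
      then have "s [^]\<^bsub>H\<^esub> k = \<one>\<^bsub>H\<^esub>" using lx tH.spow_carr by simp
      then have "k = 0" by (rule inf)
      then have "?G3 #>\<^bsub>BG n g\<^esub> x = ?G3" using k by (simp add: one_FactGroup)
      then show "x \<in> ?G3" using B.rcos_self[OF x N.subgroup_axioms] by simp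
    qed
  qed
qed

theorem mainTheorem10:
  fixes H :: "('h, 'c) monoid_scheme" and lam :: "bgen word set \<Rightarrow> 'h"
    and n g :: nat
  assumes "g \<ge> 1" and "n \<ge> 3"
    and "group H"
    and "lam \<in> hom (braid_group n g) H"
    and "lam ` carrier (braid_group n g) = carrier H"
    and "H\<lparr>carrier := lam ` iota_image n g\<rparr> \<cong> integer_group"
  shows "\<exists>\<iota>. \<iota> \<in> iso H (braid_group n g Mod lower_central (braid_group n g) 3) \<and>
           (\<forall>x \<in> braid_gens n g. \<iota> (lam (bgen_elem n g x)) =
               lower_central (braid_group n g) 3 #>\<^bsub>braid_group n g\<^esub> bgen_elem n g x)"
proof -
  interpret B: group "braid_group n g" by (rule B_group)
  let ?G3 = "lower_central (braid_group n g) 3"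
  let ?Q = "braid_group n g Mod ?G3"
  interpret lh: group_hom "braid_group n g" H lam
    by (simp add: group_hom_def group_hom_axioms_def B.is_group assms(3,4))
  have ker: "kernel (braid_group n g) H lam = ?G3" by (rule kernel_eq[OF assms(1-4) assms(6)])
  define F where "F = (\<lambda>UU. the_elem (lam ` UU))"
  have Fiso: "F \<in> iso ?Q H" using lh.FactGroup_iso_set[OF assms(5)] ker by (simp add: F_def)
  interpret N: normal ?G3 "braid_group n g" by (rule B.LC3_normal)
  interpret Q: group ?Q by (rule N.factorgroup_is_group)
  define \<iota> where "\<iota> = inv_into (carrier ?Q) F"
  have iso: "\<iota> \<in> iso H ?Q" unfolding \<iota>_def by (rule Q.iso_set_sym[OF Fiso])
  have inj: "inj_on F (carrier ?Q)" using Fiso by (auto simp: iso_def bij_betw_def)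
  have vals: "\<iota> (lam (bgen_elem n g x)) = ?G3 #>\<^bsub>braid_group n g\<^esub> bgen_elem n g x"
    if x: "x \<in> braid_gens n g" for x
  proof -
    let ?b = "bgen_elem n g x"
    have bc: "?b \<in> carrier (braid_group n g)" using x by (rule B_gen_carrier)
    have cos: "?G3 #>\<^bsub>braid_group n g\<^esub> ?b \<in> carrier ?Q"
      using bc by (auto simp: carrier_FactGroup)
    have im: "lam ` (?G3 #>\<^bsub>braid_group n g\<^esub> ?b) = {lam ?b}"
    proof
      show "lam ` (?G3 #>\<^bsub>braid_group n g\<^esub> ?b) \<subseteq> {lam ?b}"
      proof
        fix y assume "y \<in> lam ` (?G3 #>\<^bsub>braid_group n g\<^esub> ?b)"
        then obtain h where h: "h \<in> ?G3" "y = lam (h \<otimes>\<^bsub>braid_group n g\<^esub> ?b)"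
          by (auto simp: r_coset_def)
        have "h \<in> kernel (braid_group n g) H lam" using h ker by simp
        then have "h \<in> carrier (braid_group n g)" "lam h = \<one>\<^bsub>H\<^esub>" by (auto simp: kernel_def)
        then show "y \<in> {lam ?b}" using h bc by simp
      qed
      have "\<one>\<^bsub>braid_group n g\<^esub> \<otimes>\<^bsub>braid_group n g\<^esub> ?b \<in> ?G3 #>\<^bsub>braid_group n g\<^esub> ?b"
        using N.subgroup_axioms subgroup.one_closed unfolding r_coset_def by blast
      then show "{lam ?b} \<subseteq> lam ` (?G3 #>\<^bsub>braid_group n g\<^esub> ?b)" using bc by force
    qed
    have "F (?G3 #>\<^bsub>braid_group n g\<^esub> ?b) = lam ?b" unfolding F_def im by simp
    then show ?thesis unfolding \<iota>_def using inv_into_f_f[OF inj cos] by simp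
  qed
  show ?thesis using iso vals by blast
qed


end
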